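(* Let $(G,L,v)$ be a reachable triple, $i\in[4]$ a color and $D\ge2$ an integer. Then: (1) $P(G,L,v,i,D)=0$ if and only if $\Pr_{G,L}[c(v)=i]=0$; (2) $P(G,L,v,i,D)=\frac12$ if and only if $\Pr_{G,L}[c(v)=i]=\frac12$; (3) $P(G,L,v,i,D)\in[\frac1{13},\frac{13}{27}]$ if and only if $\Pr_{G,L}[c(v)=i]\in[\frac1{13},\frac{13}{27}]$.
   Context: Colors are $[4]=\{1,2,3,4\}$. A list-coloring instance $(G,L)$ is a finite simple graph $G=(V,E)$ with $L:V\to 2^{[4]}$; a proper coloring is $c:V\to[4]$ with $c(u)\in L(u)$ for all $u$ and $c(u)\ne c(w)$ on every edge; $\Pr_{G,L}[c(v)=i]$ is the probability that $c(v)=i$ for $c$ uniform over proper colorings of $(G,L)$. For a vertex $v$, $G_v$ is $G$ with $v$ and its incident edges removed, and $G_{v,w}=(G_v)_w$. If $v$ has neighbors $v_1,\dots,v_d$ (in a fixed order), then for $k\in[d]$ and a color $j$, $L_{k,j}$ is the list assignment on $G_v$ with $L_{k,j}(v_\ell)=L(v_\ell)\setminus\{j\}$ for $\ell<k$ and $L_{k,j}(u)=L(u)$ for all other vertices $u$ (so $L_{1,j}=L$). A triple $(G,L,v)$ with $v\in V$ is reachable if $\deg_G(u)\le3$ and $|L(u)|\ge\deg_G(u)+1$ for every $u\in V$, and moreover $\deg_G(v)\le2$ and $|L(v)|\ge\deg_G(v)+2$. The procedure $P(G,L,v,i,D)$ ($i\in[4]$, $D$ an integer) is defined recursively (empty products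 equal $1$): (a) If $i\notin L(v)$, return $0$. Otherwise, if $D\le 0$ or $\deg_G(v)=0$, return $1/|L(v)|$. (b) If $\deg_G(v)=1$ with neighbor $v_1$: let $x=P(G_v,L,v_1,i,D-1)$. If $|L(v)|=2$, say $L(v)=\{i,j\}$, let $y=P(G_v,L,v_1,j,D-1)$ and return $\frac{1-x}{2-x-y}$. If $|L(v)|=4$, return $\frac{1-x}{3}$. If $|L(v)|=3$, let $j$ be the unique color in $[4]\setminus L(v)$, $y=P(G_v,L,v_1,j,D-1)$, and return $\frac{1-x}{2+y}$. (c) If $\deg_G(v)=2$: order its neighbors $v_1,v_2$ so that $\deg_G(v_1)\ge\deg_G(v_2)$ and, if $\deg_G(v_1)=\deg_G(v_2)=1$, so that $i\notin L(v_1)$ implies $i\notin L(v_2)$. Let $u_1,\dots,u_{d_1}$ be the neighbors of $v_1$ in $G_v$ (fixed order) and for $k\in[d_1]$, $w\in[4]$ let $L'_{k,w}$ be the list assignment on $G_{v,v_1}$ with $L'_{k,w}(u_\ell)=L(u_\ell)\setminus\{w\}$ for $\ell<k$ and $L'_{k,w}(u)=L(u)$ otherwise. Set $x_{k,w}=P(G_{v,v_1},L'_{k,w},u_k,w,D-1)$ for $k\in[d_1]$, $w\in L(v_1)$. For $j\in L(v)$ set $f_j=0$ if $j\notin L(v_1)$ and otherwise $f_j=\frac{\prod_{k=1}^{d_1}(1-x_{k,j})}{\sum_{w\in L(v_1)}\prod_{k=1}^{d_1}(1-x_{k,w})}$, and set $y_j=P(G_v,L_{2,j},v_2,j,D-1)$.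 Return $\frac{(1-f_i)(1-y_i)}{\sum_{j\in L(v)}(1-f_j)(1-y_j)}$. (d) If $\deg_G(v)=3$ with neighbors $v_1,v_2,v_3$: for $j\in L(v)$ let $x_j=P(G_v,L_{1,j},v_1,j,D-1)$, $y_j=P(G_v,L_{2,j},v_2,j,D-1)$, $z_j=P(G_v,L_{3,j},v_3,j,D-1)$, and return $\frac{(1-x_i)(1-y_i)(1-z_i)}{\sum_{j\in L(v)}(1-x_j)(1-y_j)(1-z_j)}$. For reachable triples, all recursive calls are again on reachable triples and case (d) never occurs. *)

theory Defs
  imports Complex_Main
begin

text \<open>Graphs: a pair (V, E) with E a set of 2-element subsets of V.
  Colours are the naturals 1..4. A list assignment is a function 'a => nat set.\<close>

type_synonym 'a graph = "'a set \<times> 'a set set"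
type_synonym 'a lists = "'a \<Rightarrow> nat set"
type_synonym 'a nbord = "'a set set \<Rightarrow> 'a \<Rightarrow> 'a list"

definition nbrs :: "'a set set \<Rightarrow> 'a \<Rightarrow> 'a set" where
  "nbrs E v = {u. {u, v} \<in> E}"

definition deg :: "'a set set \<Rightarrow> 'a \<Rightarrow> nat" where
  "deg E v = card (nbrs E v)"

definition simple_graph :: "'a graph \<Rightarrow> bool" where
  "simple_graph G \<longleftrightarrow> finite (fst G) \<and> (\<forall>e\<in>snd G. e \<subseteq> fst G \<and> card e = 2)"

definition delv :: "'a graph \<Rightarrow> 'a \<Rightarrow> 'a graph" where
  "delv G v = (fst G - {v}, {e \<in> snd G. v \<notin> e})"

text \<open>The "fixed order" of neighbours: an arbitrary function listing the
  neighbours of a vertex (in a given edge set) without repetition.\<close>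
definition valid_nb :: "'a nbord \<Rightarrow> bool" where
  "valid_nb nb \<longleftrightarrow> (\<forall>E u. finite (nbrs E u) \<longrightarrow>
      distinct (nb E u) \<and> set (nb E u) = nbrs E u)"

text \<open>lmod L us k w removes w from the lists of the first k entries of us
  (0-based positions 0..k-1). Thus L_{k,j} of the paper (1-based k) is lmod L us (k-1) j.\<close>
definition lmod :: "'a lists \<Rightarrow> 'a list \<Rightarrow> nat \<Rightarrow> nat \<Rightarrow> 'a lists" where
  "lmod L us k w = (\<lambda>u. if u \<in> set (take k us) then L u - {w} else L u)"

definition colorings :: "'a graph \<Rightarrow> 'a lists \<Rightarrow> ('a \<Rightarrow> nat) set" where
  "colorings G L = {c. (\<forall>u\<in>fst G. c u \<in> L u) \<and> (\<forall>u. u \<notin> fst G \<longrightarrow> c u = 0)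
      \<and> (\<forall>e\<in>snd G. \<forall>x\<in>e. \<forall>y\<in>e. x \<noteq> y \<longrightarrow> c x \<noteq> c y)}"

definition prob :: "'a graph \<Rightarrow> 'a lists \<Rightarrow> 'a \<Rightarrow> nat \<Rightarrow> real" where
  "prob G L v i = real (card {c \<in> colorings G L. c v = i}) / real (card (colorings G L))"

definition reachable :: "'a graph \<Rightarrow> 'a lists \<Rightarrow> 'a \<Rightarrow> bool" where
  "reachable G L v \<longleftrightarrow> simple_graph G \<and> (\<forall>u\<in>fst G. L u \<subseteq> {1..4})
     \<and> (\<forall>u\<in>fst G. deg (snd G) u \<le> 3 \<and> card (L u) \<ge> deg (snd G) u + 1)
     \<and> v \<in> fst G \<and> deg (snd G) v \<le> 2 \<and> card (L v) \<ge> deg (snd G) v + 2"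

text \<open>One unfolding of the procedure, with R the procedure at depth D-1.\<close>
definition Pstep :: "'a nbord \<Rightarrow> ('a graph \<Rightarrow> 'a lists \<Rightarrow> 'a \<Rightarrow> nat \<Rightarrow> real)
    \<Rightarrow> 'a graph \<Rightarrow> 'a lists \<Rightarrow> 'a \<Rightarrow> nat \<Rightarrow> real" where
  "Pstep nb R G L v i =
    (let E = snd G; ns = nb E v; Gv = delv G v in
     if i \<notin> L v then 0
     else if deg E v = 0 then 1 / real (card (L v))
     else if deg E v = 1 then
       (let v1 = ns ! 0; x = R Gv L v1 i in
        if card (L v) = 2 then
          (let j = the_elem (L v - {i}); y = R Gv L v1 j in (1 - x) / (2 - x - y))
        else if card (L v) = 4 then (1 - x) / 3
        else if card (L v) = 3 then
          (let j = the_elem ({1..4} - L v); y = R Gv L v1 j in (1 - x) / (2 + y))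
        else 0)
     else if deg E v = 2 then
       (let a = ns ! 0; b = ns ! 1;
            ok = (deg E a \<ge> deg E b \<and>
                  (deg E a = 1 \<and> deg E b = 1 \<longrightarrow> (i \<notin> L a \<longrightarrow> i \<notin> L b)));
            v1 = (if ok then a else b); v2 = (if ok then b else a);
            Gvv1 = delv Gv v1;
            us = nb (snd Gv) v1; d1 = length us;
            pw = (\<lambda>w. \<Prod>k<d1. (1 - R Gvv1 (lmod L us k w) (us ! k) w));
            f = (\<lambda>j. if j \<notin> L v1 then 0 else pw j / (\<Sum>w\<in>L v1. pw w));
            y = (\<lambda>j. R Gv (lmod L [v1, v2] 1 j) v2 j)
        in (1 - f i) * (1 - y i) / (\<Sum>j\<in>L v. (1 - f j) * (1 - y j)))
     else if deg E v = 3 then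
       (let t = (\<lambda>j. \<Prod>k<3. (1 - R Gv (lmod L ns k j) (ns ! k) j))
        in t i / (\<Sum>j\<in>L v. t j))
     else 0)"

primrec Pfuel :: "'a nbord \<Rightarrow> nat \<Rightarrow> 'a graph \<Rightarrow> 'a lists \<Rightarrow> 'a \<Rightarrow> nat \<Rightarrow> real" where
  "Pfuel nb 0 G L v i = (if i \<notin> L v then 0 else 1 / real (card (L v)))"
| "Pfuel nb (Suc n) G L v i = Pstep nb (Pfuel nb n) G L v i"

text \<open>The procedure P(G,L,v,i,D) for an integer depth D (D \<le> 0 is the base case).\<close>
definition P :: "'a nbord \<Rightarrow> 'a graph \<Rightarrow> 'a lists \<Rightarrow> 'a \<Rightarrow> nat \<Rightarrow> int \<Rightarrow> real" where
  "P nb G L v i D = Pfuel nb (nat D) G L v i"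

end

theory Submission
  imports Defs "HOL-Library.FuncSet"
begin

lemma nbrs_delv: "nbrs (snd (delv G v)) u = (if u = v then {} else nbrs (snd G) u - {v})"
  unfolding nbrs_def delv_def by auto

lemma nbrs_sym: "x \<in> nbrs E u \<longleftrightarrow> u \<in> nbrs E x"
  unfolding nbrs_def by (simp add: insert_commute)

lemma simple_nbrs_sub: "simple_graph G \<Longrightarrow> nbrs (snd G) u \<subseteq> fst G"
  unfolding simple_graph_def nbrs_def by auto

lemma simple_nbrs_fin: "simple_graph G \<Longrightarrow> finite (nbrs (snd G) u)"
  using simple_nbrs_sub simple_graph_def finite_subset by metis

lemma simple_nbrs_irrefl: "simple_graph G \<Longrightarrow> u \<notin> nbrs (snd G) u"
  unfolding simple_graph_def nbrs_def by force

lemma simple_delv: "simple_graph G \<Longrightarrow> simple_graph (delv G v)"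
  unfolding simple_graph_def delv_def by auto

lemma deg_delv_adj: "simple_graph G \<Longrightarrow> u \<in> nbrs (snd G) v \<Longrightarrow>
   deg (snd (delv G v)) u = deg (snd G) u - 1"
  unfolding deg_def nbrs_delv
  using simple_nbrs_irrefl[of G v] nbrs_sym[of u "snd G" v] simple_nbrs_fin[of G u]
  by (auto simp: card_Diff_singleton)

lemma deg_delv_le: "simple_graph G \<Longrightarrow> deg (snd (delv G v)) u \<le> deg (snd G) u"
  unfolding deg_def nbrs_delv using simple_nbrs_fin[of G u]
  by (auto intro: card_mono)

definition wfg :: "'a graph \<Rightarrow> 'a lists \<Rightarrow> bool" where
 "wfg G L \<longleftrightarrow> simple_graph G \<and> (\<forall>u\<in>fst G. L u \<subseteq> {1..4})
   \<and> (\<forall>u\<in>fst G. deg (snd G) u \<le> 3 \<and> card (L u) \<ge> deg (snd G) u + 1)"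

lemma wfgD: assumes "wfg G L" shows "simple_graph G" "u \<in> fst G \<Longrightarrow> L u \<subseteq> {1..4}"
  "u \<in> fst G \<Longrightarrow> deg (snd G) u \<le> 3" "u \<in> fst G \<Longrightarrow> card (L u) \<ge> deg (snd G) u + 1"
  using assms unfolding wfg_def by auto

lemma reachable_alt: "reachable G L v \<longleftrightarrow> wfg G L \<and> v \<in> fst G \<and> deg (snd G) v \<le> 2 \<and> card (L v) \<ge> deg (snd G) v + 2"
  unfolding reachable_def wfg_def by auto

lemma lmod_0[simp]: "lmod L us 0 j = L"
  unfolding lmod_def by auto

lemma lmod_notin: "u \<notin> set (take k us) \<Longrightarrow> lmod L us k j u = L u"
  unfolding lmod_def by auto

lemma lmod_sub: "lmod L us k j u \<subseteq> L u"
  unfolding lmod_def by auto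

lemma card_fst_delv: "finite (fst G) \<Longrightarrow> v \<in> fst G \<Longrightarrow> card (fst (delv G v)) < card (fst G)"
  unfolding delv_def by (metis card_Diff1_less fst_conv)

lemma nth_notin_take: "distinct xs \<Longrightarrow> k < length xs \<Longrightarrow> xs ! k \<notin> set (take k xs)"
  by (auto simp: in_set_conv_nth nth_eq_iff_index_eq)

lemma deg_pos: assumes "simple_graph G" "x \<in> nbrs (snd G) u" shows "deg (snd G) u \<ge> 1"
proof -
  have "nbrs (snd G) u \<noteq> {}" using assms(2) by blast
  then have "card (nbrs (snd G) u) > 0" using simple_nbrs_fin[OF assms(1), of u]
    card_gt_0_iff by blast
  then show ?thesis unfolding deg_def by linarith
qed

lemma wfg_lmod_delv:
  assumes "wfg G L" "v \<in> fst G" "set us \<subseteq> nbrs (snd G) v"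
  shows "wfg (delv G v) (lmod L us k j)"
proof -
  have sg: "simple_graph G" using assms(1) unfolding wfg_def by blast
  have fv: "fst (delv G v) = fst G - {v}" by (simp add: delv_def)
  { fix u assume u: "u \<in> fst G - {v}"
    have uG: "u \<in> fst G" using u by blast
    have Lu: "L u \<subseteq> {1..4}" "deg (snd G) u \<le> 3" "card (L u) \<ge> deg (snd G) u + 1"
      using wfgD(2,3,4)[OF assms(1) uG] by auto
    have fin: "finite (L u)" using finite_subset[OF Lu(1)] by simp
    have d1: "deg (snd (delv G v)) u \<le> deg (snd G) u" by (rule deg_delv_le[OF sg])
    have "card (lmod L us k j u) \<ge> deg (snd (delv G v)) u + 1"
    proof (cases "u \<in> set (take k us)")
      case True
      then have "u \<in> set us" by (meson in_set_takeD)
      then have "u \<in> nbrs (snd G) v" using assms(3) by blast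
      then have "deg (snd (delv G v)) u = deg (snd G) u - 1" "deg (snd G) u \<ge> 1"
        using deg_delv_adj[OF sg] apply presburger
        using \<open>u \<in> nbrs (snd G) v\<close> nbrs_sym[of u "snd G" v] deg_pos[OF sg] by blast
      moreover have "card (L u - {j}) \<ge> card (L u) - 1"
        using fin by (simp add: card_Diff_singleton_if)
      moreover have "lmod L us k j u = L u - {j}" using True unfolding lmod_def by simp
      ultimately show ?thesis using Lu(3)
      proof -
        assume a: "deg (snd (delv G v)) u = deg (snd G) u - 1" "1 \<le> deg (snd G) u"
          "card (L u) - 1 \<le> card (L u - {j})" "lmod L us k j u = L u - {j}"
          "deg (snd G) u + 1 \<le> card (L u)"
        show ?thesis unfolding a(1,4) using a(2,3,5) by linarith
      qed
    next
      case False
      then show ?thesis using d1 Lu by (simp add: lmod_notin)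
    qed
    moreover have "lmod L us k j u \<subseteq> {1..4}" using Lu(1) lmod_sub[of L us k j u] by (rule order_trans[rotated])
    moreover have "deg (snd (delv G v)) u \<le> 3" using d1 Lu(2) by linarith
    ultimately have "lmod L us k j u \<subseteq> {1..4} \<and> deg (snd (delv G v)) u \<le> 3 \<and>
       card (lmod L us k j u) \<ge> deg (snd (delv G v)) u + 1" by (intro conjI) }
  then show ?thesis unfolding wfg_def fv using simple_delv[OF sg] by (intro conjI ballI) auto
qed

lemma reach_child:
  assumes "wfg G L" "v \<in> fst G" "distinct us" "set us \<subseteq> nbrs (snd G) v" "k < length us"
  shows "reachable (delv G v) (lmod L us k j) (us ! k)"
proof -
  have sg: "simple_graph G" using assms(1) unfolding wfg_def by blast
  let ?u = "us ! k"
  have un: "?u \<in> nbrs (snd G) v" using assms(4,5) nth_mem by blast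
  have uV: "?u \<in> fst G" using simple_nbrs_sub[OF sg] un by blast
  have uv: "?u \<noteq> v" using simple_nbrs_irrefl[OF sg] un by blast
  have nt: "?u \<notin> set (take k us)" using nth_notin_take assms(3,5) by blast
  have dd: "deg (snd (delv G v)) ?u = deg (snd G) ?u - 1" using deg_delv_adj[OF sg un] .
  have dpos: "deg (snd G) ?u \<ge> 1"
    using un nbrs_sym[of ?u "snd G" v] deg_pos[OF sg] by blast
  have Lu: "deg (snd G) ?u \<le> 3" "card (L ?u) \<ge> deg (snd G) ?u + 1"
    using wfgD[OF assms(1)] uV by auto
  have "?u \<in> fst (delv G v)" using uV uv by (simp add: delv_def)
  moreover have "deg (snd (delv G v)) ?u \<le> 2" using dd Lu by linarith
  moreover have "card (lmod L us k j ?u) \<ge> deg (snd (delv G v)) ?u + 2"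
    using dd dpos Lu lmod_notin[OF nt] by simp
  ultimately show ?thesis unfolding reachable_alt
    using wfg_lmod_delv[OF assms(1,2,4)] by blast
qed

lemma lmod_Nil[simp]: "lmod L [] k j = L"
  unfolding lmod_def by auto

lemma wfg_delv: "wfg G L \<Longrightarrow> v \<in> fst G \<Longrightarrow> wfg (delv G v) L"
  using wfg_lmod_delv[of G L v "[]"] by simp

lemma colD: assumes "c \<in> colorings G L"
  shows "u \<in> fst G \<Longrightarrow> c u \<in> L u" "u \<notin> fst G \<Longrightarrow> c u = 0"
   "e \<in> snd G \<Longrightarrow> x \<in> e \<Longrightarrow> y \<in> e \<Longrightarrow> x \<noteq> y \<Longrightarrow> c x \<noteq> c y"
  using assms unfolding colorings_def by auto

lemma finite_col:
  assumes "finite (fst G)" "\<And>u. u \<in> fst G \<Longrightarrow> finite (L u)"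
  shows "finite (colorings G L)"
proof -
  let ?r = "\<lambda>c. restrict c (fst G)"
  have inj: "inj_on ?r (colorings G L)"
  proof (rule inj_onI)
    fix c d assume c: "c \<in> colorings G L" and d: "d \<in> colorings G L" and e: "?r c = ?r d"
    show "c = d"
    proof
      fix u show "c u = d u"
      proof (cases "u \<in> fst G")
        case True then show ?thesis using e by (metis restrict_apply')
      next
        case False then show ?thesis using colD(2)[OF c] colD(2)[OF d] by simp
      qed
    qed
  qed
  have "?r ` colorings G L \<subseteq> PiE (fst G) L"
    using colD(1)[of _ G L] by (auto simp: PiE_def Pi_def)
  moreover have "finite (PiE (fst G) L)" using assms by (simp add: finite_PiE)
  ultimately have "finite (?r ` colorings G L)" using finite_subset by blast
  then show ?thesis using finite_imageD inj by blast
qed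

lemma simple_edge: "simple_graph G \<Longrightarrow> e \<in> snd G \<Longrightarrow> u \<in> e \<Longrightarrow> \<exists>x. x \<noteq> u \<and> e = {u, x}"
  unfolding simple_graph_def by (metis card_2_iff insert_commute insert_iff singletonD)

lemma count_vertex:
  assumes sg: "simple_graph G" and uV: "u \<in> fst G" and ds: "distinct us"
    and su: "set us = nbrs (snd G) u" and jL: "j \<in> L u"
  shows "card {c \<in> colorings G L. c u = j} = card (colorings (delv G u) (lmod L us (length us) j))"
proof -
  let ?A = "{c \<in> colorings G L. c u = j}"
  let ?L' = "lmod L us (length us) j"
  let ?B = "colorings (delv G u) ?L'"
  have L': "?L' x = (if x \<in> nbrs (snd G) u then L x - {j} else L x)" for x
    unfolding lmod_def using su by simp
  have f1: "c(u := 0) \<in> ?B" if c: "c \<in> ?A" for c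
  proof -
    have cc: "c \<in> colorings G L" "c u = j" using c by auto
    show ?thesis unfolding colorings_def
    proof (intro CollectI conjI ballI allI impI)
      fix x assume x: "x \<in> fst (delv G u)"
      then have xV: "x \<in> fst G" "x \<noteq> u" by (auto simp: delv_def)
      show "(c(u := 0)) x \<in> ?L' x"
      proof (cases "x \<in> nbrs (snd G) u")
        case True
        then have "{x, u} \<in> snd G" unfolding nbrs_def by simp
        then have "c x \<noteq> c u" using colD(3)[OF cc(1)] xV(2) by blast
        then show ?thesis using True L' colD(1)[OF cc(1) xV(1)] xV(2) cc(2) by simp
      next
        case False then show ?thesis using L' colD(1)[OF cc(1) xV(1)] xV(2) by simp
      qed
    next
      fix x assume "x \<notin> fst (delv G u)"
      then have "x = u \<or> x \<notin> fst G" by (auto simp: delv_def)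
      then show "(c(u := 0)) x = 0" using colD(2)[OF cc(1)] by auto
    next
      fix e x y assume e: "e \<in> snd (delv G u)" and xy: "x \<in> e" "y \<in> e" "x \<noteq> y"
      then have "e \<in> snd G" "u \<notin> e" by (auto simp: delv_def)
      then show "(c(u := 0)) x \<noteq> (c(u := 0)) y" using colD(3)[OF cc(1)] xy by auto
    qed
  qed
  have f2: "d(u := j) \<in> ?A" if d: "d \<in> ?B" for d
  proof -
    have dd: "d \<in> colorings (delv G u) ?L'" using d by simp
    have "d(u := j) \<in> colorings G L" unfolding colorings_def
    proof (intro CollectI conjI ballI allI impI)
      fix x assume x: "x \<in> fst G"
      show "(d(u := j)) x \<in> L x"
      proof (cases "x = u")
        case True then show ?thesis using jL by simp
      next
        case False
        then have "x \<in> fst (delv G u)" using x by (simp add: delv_def)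
        then have "d x \<in> ?L' x" using colD(1)[OF dd] by blast
        then show ?thesis using False lmod_sub[of L us "length us" j x] by auto
      qed
    next
      fix x assume x: "x \<notin> fst G"
      then have "x \<noteq> u" "x \<notin> fst (delv G u)" using uV by (auto simp: delv_def)
      then show "(d(u := j)) x = 0" using colD(2)[OF dd] by simp
    next
      fix e x y assume e: "e \<in> snd G" and xy: "x \<in> e" "y \<in> e" "x \<noteq> y"
      show "(d(u := j)) x \<noteq> (d(u := j)) y"
      proof (cases "u \<in> e")
        case False
        then have "e \<in> snd (delv G u)" using e by (simp add: delv_def)
        then have "d x \<noteq> d y" using colD(3)[OF dd] xy by blast
        then show ?thesis using False xy by auto
      next
        case True
        obtain z where z: "z \<noteq> u" "e = {u, z}" using simple_edge[OF sg e True] by blast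
        have zn: "z \<in> nbrs (snd G) u" using e z unfolding nbrs_def by (simp add: insert_commute)
        have zV: "z \<in> fst G" using simple_nbrs_sub[OF sg] zn by blast
        then have "z \<in> fst (delv G u)" using z by (simp add: delv_def)
        then have "d z \<in> ?L' z" using colD(1)[OF dd] by blast
        then have "d z \<noteq> j" using L' zn by simp
        then have "(d(u := j)) z \<noteq> (d(u := j)) u" using z by simp
        moreover have "(x = u \<and> y = z) \<or> (x = z \<and> y = u)" using xy z by auto
        ultimately show ?thesis by auto
      qed
    qed
    then show ?thesis by simp
  qed
  have "bij_betw (\<lambda>c. c(u := 0)) ?A ?B"
  proof (rule bij_betw_byWitness[where f' = "\<lambda>d. d(u := j)"])
    show "\<forall>a\<in>?A. (a(u := 0))(u := j) = a" by auto
    show "\<forall>a'\<in>?B. (a'(u := j))(u := 0) = a'"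
    proof
      fix d assume "d \<in> ?B"
      then have "d u = 0" using colD(2)[of d "delv G u" ?L' u] by (simp add: delv_def)
      then show "(d(u := j))(u := 0) = d" by auto
    qed
    show "(\<lambda>c. c(u := 0)) ` ?A \<subseteq> ?B" using f1 by blast
    show "(\<lambda>d. d(u := j)) ` ?B \<subseteq> ?A" using f2 by blast
  qed
  then show ?thesis by (rule bij_betw_same_card)
qed

lemma count_vertex_notin:
  assumes "u \<in> fst G" "j \<notin> L u"
  shows "{c \<in> colorings G L. c u = j} = {}"
  using colD(1)[of _ G L u] assms by blast

lemma col_step:
  assumes ds: "distinct us" and k: "k < length us" and j: "j \<noteq> 0"
  shows "colorings H (lmod L us (Suc k) j) = {c \<in> colorings H (lmod L us k j). c (us ! k) \<noteq> j}"
proof -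
  let ?x = "us ! k"
  have nt: "?x \<notin> set (take k us)" using nth_notin_take ds k by blast
  have tk: "set (take (Suc k) us) = insert ?x (set (take k us))"
    using k by (simp add: take_Suc_conv_app_nth)
  have Lx: "lmod L us (Suc k) j y = (if y = ?x then lmod L us k j y - {j} else lmod L us k j y)" for y
    unfolding lmod_def using tk nt by auto
  show ?thesis
  proof (intro set_eqI iffI)
    fix c assume c: "c \<in> colorings H (lmod L us (Suc k) j)"
    have "c ?x \<noteq> j"
    proof (cases "?x \<in> fst H")
      case True then show ?thesis using colD(1)[OF c True] Lx by simp
    next
      case False then show ?thesis using colD(2)[OF c False] j by simp
    qed
    moreover have "c \<in> colorings H (lmod L us k j)"
      using c Lx unfolding colorings_def by (auto split: if_splits)
    ultimately show "c \<in> {c \<in> colorings H (lmod L us k j). c (us ! k) \<noteq> j}" by simp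
  next
    fix c assume "c \<in> {c \<in> colorings H (lmod L us k j). c (us ! k) \<noteq> j}"
    then have c: "c \<in> colorings H (lmod L us k j)" "c ?x \<noteq> j" by auto
    show "c \<in> colorings H (lmod L us (Suc k) j)"
      using c Lx unfolding colorings_def by auto
  qed
qed

lemma colorings_mono: "(\<And>u. L' u \<subseteq> L u) \<Longrightarrow> colorings G L' \<subseteq> colorings G L"
  unfolding colorings_def by blast

lemma col_lmod_sub: "colorings H (lmod L us k j) \<subseteq> colorings H L"
  by (rule colorings_mono) (rule lmod_sub)

lemma tele:
  assumes ds: "distinct us" and j: "j \<noteq> 0" and fin: "finite (colorings H L)" and k: "k \<le> length us"
  shows "real (card (colorings H (lmod L us k j))) =
         real (card (colorings H L)) * (\<Prod>m<k. (1 - prob H (lmod L us m j) (us ! m) j))"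
  using k
proof (induction k)
  case 0 then show ?case by simp
next
  case (Suc k)
  let ?A = "colorings H (lmod L us k j)"
  let ?S = "{c \<in> ?A. c (us ! k) = j}"
  have kl: "k < length us" using Suc.prems by simp
  have finA: "finite ?A" using finite_subset[OF col_lmod_sub fin] .
  have eq: "colorings H (lmod L us (Suc k) j) = ?A - ?S" using col_step[OF ds kl j] by auto
  have cardeq: "card (colorings H (lmod L us (Suc k) j)) = card ?A - card ?S"
    unfolding eq by (rule card_Diff_subset) (use finA in auto)
  have Sle: "card ?S \<le> card ?A" using finA by (intro card_mono) auto
  have step: "real (card (colorings H (lmod L us (Suc k) j))) = real (card ?A) * (1 - prob H (lmod L us k j) (us ! k) j)"
  proof (cases "card ?A = 0")
    case True then show ?thesis using cardeq by simp
  next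
    case False
    then show ?thesis unfolding cardeq prob_def using Sle by (simp add: of_nat_diff field_simps)
  qed
  show ?case unfolding step Suc.IH[OF Suc_leD[OF Suc.prems]] by simp
qed

lemma card_partition:
  assumes fin: "finite (colorings G L)" and uV: "u \<in> fst G" and fL: "finite (L u)"
  shows "card (colorings G L) = (\<Sum>j\<in>L u. card {c \<in> colorings G L. c u = j})"
proof -
  have "colorings G L = (\<Union>j\<in>L u. {c \<in> colorings G L. c u = j})"
    using colD(1)[of _ G L u] uV by blast
  then have "card (colorings G L) = card (\<Union>j\<in>L u. {c \<in> colorings G L. c u = j})" by simp
  also have "\<dots> = (\<Sum>j\<in>L u. card {c \<in> colorings G L. c u = j})"
    by (rule card_UN_disjoint) (use fL fin in auto)
  finally show ?thesis .
qed

lemma sum_prob: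
  assumes fin: "finite (colorings G L)" and uV: "u \<in> fst G" and fL: "finite (L u)"
    and pos: "card (colorings G L) > 0"
  shows "(\<Sum>j\<in>L u. prob G L u j) = 1"
proof -
  have "(\<Sum>j\<in>L u. prob G L u j) = (\<Sum>j\<in>L u. real (card {c \<in> colorings G L. c u = j})) / real (card (colorings G L))"
    unfolding prob_def by (simp add: sum_divide_distrib)
  also have "\<dots> = 1" using card_partition[OF fin uV fL] pos by (simp flip: of_nat_sum)
  finally show ?thesis .
qed

lemma prob_notin: "u \<in> fst G \<Longrightarrow> j \<notin> L u \<Longrightarrow> prob G L u j = 0"
proof -
  assume a: "u \<in> fst G" "j \<notin> L u"
  have "{c \<in> colorings G L. c u = j} = {}" using count_vertex_notin[of u G j L, OF a] .
  then show ?thesis unfolding prob_def by (metis card.empty of_nat_0 div_0)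
qed

lemma prob_nonneg: "prob G L u j \<ge> 0"
  unfolding prob_def by simp

definition tprod :: "('a graph \<Rightarrow> 'a lists \<Rightarrow> 'a \<Rightarrow> nat \<Rightarrow> real) \<Rightarrow> 'a graph \<Rightarrow> 'a lists \<Rightarrow> 'a \<Rightarrow> 'a list \<Rightarrow> nat \<Rightarrow> real" where
  "tprod R G L u us j = (\<Prod>k<length us. (1 - R (delv G u) (lmod L us k j) (us ! k) j))"

lemma prob_vertex:
  assumes sg: "simple_graph G" and uV: "u \<in> fst G" and ds: "distinct us"
    and su: "set us = nbrs (snd G) u" and fL: "finite (L u)" and z: "0 \<notin> L u"
    and fin: "finite (colorings G L)" and fin': "finite (colorings (delv G u) L)"
    and pos: "card (colorings (delv G u) L) > 0"
  shows "prob G L u i = (if i \<in> L u then tprod prob G L u us i / (\<Sum>j\<in>L u. tprod prob G L u us j) else 0)"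
proof -
  let ?N = "real (card (colorings (delv G u) L))"
  have cnt: "real (card {c \<in> colorings G L. c u = j}) = ?N * tprod prob G L u us j" if j: "j \<in> L u" for j
  proof -
    have "j \<noteq> 0" using z j by metis
    then show ?thesis
      unfolding count_vertex[of G u us j L, OF sg uV ds su j] tele[OF ds \<open>j \<noteq> 0\<close> fin' le_refl] tprod_def by simp
  qed
  have tot: "real (card (colorings G L)) = ?N * (\<Sum>j\<in>L u. tprod prob G L u us j)"
    unfolding card_partition[OF fin uV fL] of_nat_sum using cnt by (simp add: sum_distrib_left)
  show ?thesis
  proof (cases "i \<in> L u")
    case True
    have "prob G L u i = real (card {c \<in> colorings G L. c u = i}) / real (card (colorings G L))"
      by (simp add: prob_def)
    then show ?thesis using True cnt[OF True] tot pos by simp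
  next
    case False then show ?thesis using prob_notin[of u G i L, OF uV False] by simp
  qed
qed

lemma colorable:
  "simple_graph G \<Longrightarrow> (\<forall>u\<in>fst G. card (L u) \<ge> deg (snd G) u + 1) \<Longrightarrow> colorings G L \<noteq> {}"
proof (induction "card (fst G)" arbitrary: G rule: less_induct)
  case less
  have sg: "simple_graph G" using less.prems(1) .
  show ?case
  proof (cases "fst G = {}")
    case True
    have "(\<lambda>_. 0) \<in> colorings G L" unfolding colorings_def
    proof (intro CollectI conjI ballI allI impI)
      fix e x y assume e: "e \<in> snd G" and "x \<in> e"
      then have "e \<subseteq> fst G" using sg unfolding simple_graph_def by blast
      then show "(0::nat) \<noteq> 0" using True \<open>x \<in> e\<close> by blast
    qed (use True in auto)
    then show ?thesis by blast
  next
    case False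
    then obtain v where vV: "v \<in> fst G" by blast
    let ?G' = "delv G v"
    have sg': "simple_graph ?G'" using simple_delv[OF sg] .
    have fin: "finite (fst G)" using sg unfolding simple_graph_def by blast
    have lt: "card (fst ?G') < card (fst G)" using card_fst_delv[OF fin vV] .
    have "\<forall>u\<in>fst ?G'. card (L u) \<ge> deg (snd ?G') u + 1"
    proof
      fix u assume "u \<in> fst ?G'"
      then have "u \<in> fst G" by (simp add: delv_def)
      then have "card (L u) \<ge> deg (snd G) u + 1" using less.prems(2) by blast
      moreover have "deg (snd ?G') u \<le> deg (snd G) u" by (rule deg_delv_le[OF sg])
      ultimately show "card (L u) \<ge> deg (snd ?G') u + 1" by linarith
    qed
    then have "colorings ?G' L \<noteq> {}" using less.hyps[OF lt sg'] by blast
    then obtain c where c: "c \<in> colorings ?G' L" by blast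
    let ?N = "nbrs (snd G) v"
    have finN: "finite ?N" using simple_nbrs_fin[OF sg] .
    have cS: "card (c ` ?N) \<le> deg (snd G) v" unfolding deg_def using card_image_le[OF finN] .
    have cL: "card (L v) \<ge> deg (snd G) v + 1" using less.prems(2) vV by blast
    have "\<not> L v \<subseteq> c ` ?N"
    proof
      assume "L v \<subseteq> c ` ?N"
      then have "card (L v) \<le> card (c ` ?N)" using finN by (intro card_mono) auto
      then show False using cS cL by linarith
    qed
    then obtain a where a: "a \<in> L v" "a \<notin> c ` ?N" by blast
    have "c(v := a) \<in> colorings G L" unfolding colorings_def
    proof (intro CollectI conjI ballI allI impI)
      fix x assume x: "x \<in> fst G"
      show "(c(v := a)) x \<in> L x"
      proof (cases "x = v")
        case True then show ?thesis using a by simp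
      next
        case False
        then have "x \<in> fst ?G'" using x by (simp add: delv_def)
        then show ?thesis using colD(1)[OF c] False by simp
      qed
    next
      fix x assume x: "x \<notin> fst G"
      then have "x \<noteq> v" "x \<notin> fst ?G'" using vV by (auto simp: delv_def)
      then show "(c(v := a)) x = 0" using colD(2)[OF c] by simp
    next
      fix e x y assume e: "e \<in> snd G" and xy: "x \<in> e" "y \<in> e" "x \<noteq> y"
      show "(c(v := a)) x \<noteq> (c(v := a)) y"
      proof (cases "v \<in> e")
        case False
        then have "e \<in> snd ?G'" using e by (simp add: delv_def)
        then have "c x \<noteq> c y" using colD(3)[OF c] xy by blast
        then show ?thesis using False xy by auto
      next
        case True
        obtain z where z: "z \<noteq> v" "e = {v, z}" using simple_edge[OF sg e True] by blast
        have zn: "z \<in> ?N" using e z unfolding nbrs_def by (simp add: insert_commute)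
        then have "c z \<noteq> a" using a(2) by blast
        then have "(c(v := a)) z \<noteq> (c(v := a)) v" using z by simp
        moreover have "(x = v \<and> y = z) \<or> (x = z \<and> y = v)" using xy z by auto
        ultimately show ?thesis by auto
      qed
    qed
    then show ?thesis by blast
  qed
qed

lemma wfg_fin_L: "wfg G L \<Longrightarrow> u \<in> fst G \<Longrightarrow> finite (L u)"
  using wfgD(2)[of G L u] finite_subset[of "L u" "{1..4::nat}"] by simp

lemma wfg_fin_col: "wfg G L \<Longrightarrow> finite (colorings G L)"
  using finite_col[of G L] wfgD(1)[of G L] wfg_fin_L[of G L] unfolding simple_graph_def by blast

lemma wfg_col_pos: "wfg G L \<Longrightarrow> card (colorings G L) > 0"
proof -
  assume w: "wfg G L"
  have "colorings G L \<noteq> {}" using colorable[of G L] wfgD[OF w] by blast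
  then show ?thesis using wfg_fin_col[OF w] by (simp add: card_gt_0_iff)
qed

lemma wfg_0_notin: "wfg G L \<Longrightarrow> u \<in> fst G \<Longrightarrow> 0 \<notin> L u"
  using wfgD(2)[of G L u] by auto

definition ordok :: "'a nbord \<Rightarrow> 'a graph \<Rightarrow> 'a lists \<Rightarrow> 'a \<Rightarrow> nat \<Rightarrow> bool" where
  "ordok nb G L v i = (let E = snd G; a = nb E v ! 0; b = nb E v ! 1 in
     deg E a \<ge> deg E b \<and> (deg E a = 1 \<and> deg E b = 1 \<longrightarrow> (i \<notin> L a \<longrightarrow> i \<notin> L b)))"

definition o1 :: "'a nbord \<Rightarrow> 'a graph \<Rightarrow> 'a lists \<Rightarrow> 'a \<Rightarrow> nat \<Rightarrow> 'a" where
  "o1 nb G L v i = (if ordok nb G L v i then nb (snd G) v ! 0 else nb (snd G) v ! 1)"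
definition o2 :: "'a nbord \<Rightarrow> 'a graph \<Rightarrow> 'a lists \<Rightarrow> 'a \<Rightarrow> nat \<Rightarrow> 'a" where
  "o2 nb G L v i = (if ordok nb G L v i then nb (snd G) v ! 1 else nb (snd G) v ! 0)"

definition fval :: "'a nbord \<Rightarrow> ('a graph \<Rightarrow> 'a lists \<Rightarrow> 'a \<Rightarrow> nat \<Rightarrow> real) \<Rightarrow> 'a graph \<Rightarrow> 'a lists \<Rightarrow> 'a \<Rightarrow> 'a \<Rightarrow> nat \<Rightarrow> real" where
  "fval nb R G L v v1 j = (if j \<notin> L v1 then 0 else
      tprod R (delv G v) L v1 (nb (snd (delv G v)) v1) j /
      (\<Sum>w\<in>L v1. tprod R (delv G v) L v1 (nb (snd (delv G v)) v1) w))"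

definition yval :: "('a graph \<Rightarrow> 'a lists \<Rightarrow> 'a \<Rightarrow> nat \<Rightarrow> real) \<Rightarrow> 'a graph \<Rightarrow> 'a lists \<Rightarrow> 'a \<Rightarrow> 'a \<Rightarrow> 'a \<Rightarrow> nat \<Rightarrow> real" where
  "yval R G L v v1 v2 j = R (delv G v) (lmod L [v1, v2] 1 j) v2 j"

definition d2val :: "'a nbord \<Rightarrow> ('a graph \<Rightarrow> 'a lists \<Rightarrow> 'a \<Rightarrow> nat \<Rightarrow> real) \<Rightarrow> 'a graph \<Rightarrow> 'a lists \<Rightarrow> 'a \<Rightarrow> 'a \<Rightarrow> 'a \<Rightarrow> nat \<Rightarrow> real" where
  "d2val nb R G L v v1 v2 i = (1 - fval nb R G L v v1 i) * (1 - yval R G L v v1 v2 i) /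
     (\<Sum>j\<in>L v. (1 - fval nb R G L v v1 j) * (1 - yval R G L v v1 v2 j))"

lemma Pstep_notin: "i \<notin> L v \<Longrightarrow> Pstep nb R G L v i = 0"
  unfolding Pstep_def by simp

lemma Pstep_deg0: "i \<in> L v \<Longrightarrow> deg (snd G) v = 0 \<Longrightarrow> Pstep nb R G L v i = 1 / real (card (L v))"
  unfolding Pstep_def by simp

lemma Pstep_deg1_4: "i \<in> L v \<Longrightarrow> deg (snd G) v = 1 \<Longrightarrow> card (L v) = 4 \<Longrightarrow>
   Pstep nb R G L v i = (1 - R (delv G v) L (nb (snd G) v ! 0) i) / 3"
  unfolding Pstep_def by (simp add: Let_def)

lemma Pstep_deg1_3: "i \<in> L v \<Longrightarrow> deg (snd G) v = 1 \<Longrightarrow> card (L v) = 3 \<Longrightarrow>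
   Pstep nb R G L v i = (1 - R (delv G v) L (nb (snd G) v ! 0) i) /
     (2 + R (delv G v) L (nb (snd G) v ! 0) (the_elem ({1..4} - L v)))"
  unfolding Pstep_def by (simp add: Let_def)

lemma Pstep_deg2: assumes "i \<in> L v" "deg (snd G) v = 2" shows
   "Pstep nb R G L v i = d2val nb R G L v (o1 nb G L v i) (o2 nb G L v i) i"
proof -
  have a: "(i \<notin> L v) = False" "(deg (snd G) v = 0) = False" "(deg (snd G) v = 1) = False"
     "(deg (snd G) v = 2) = True" using assms by auto
  show ?thesis
  unfolding Pstep_def d2val_def fval_def yval_def tprod_def o1_def o2_def ordok_def Let_def
  unfolding a if_True if_False by (rule refl)
qed

lemma nb_props:
  assumes "valid_nb nb" "simple_graph G"
  shows "distinct (nb (snd G) u)" "set (nb (snd G) u) = nbrs (snd G) u"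
    "length (nb (snd G) u) = deg (snd G) u"
proof -
  have "finite (nbrs (snd G) u)" using simple_nbrs_fin[OF assms(2)] .
  then show d: "distinct (nb (snd G) u)" and s: "set (nb (snd G) u) = nbrs (snd G) u"
    using assms(1) unfolding valid_nb_def by blast+
  show "length (nb (snd G) u) = deg (snd G) u" unfolding deg_def s[symmetric] using distinct_card[OF d] by simp
qed

lemma len1: "length xs = 1 \<Longrightarrow> xs = [xs ! 0]"
  by (cases xs) auto
lemma len2: "length xs = 2 \<Longrightarrow> xs = [xs ! 0, xs ! 1]"
  by (cases xs; cases "tl xs") auto

lemma o12:
  assumes "distinct ns" "length ns = 2" "ns = nb (snd G) v"
  shows "o1 nb G L v i \<noteq> o2 nb G L v i" "set [o1 nb G L v i, o2 nb G L v i] = set ns"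
    "distinct [o1 nb G L v i, o2 nb G L v i]"
proof -
  have "ns = [ns ! 0, ns ! 1]" using len2 assms(2) by blast
  have "ns ! 0 \<noteq> ns ! 1" using nth_eq_iff_index_eq[OF assms(1), of 0 1] assms(2) by simp
  then show "o1 nb G L v i \<noteq> o2 nb G L v i" "distinct [o1 nb G L v i, o2 nb G L v i]"
    unfolding o1_def o2_def using assms(3) by auto
  have sn: "set ns = {ns ! 0, ns ! 1}" by (subst \<open>ns = [ns ! 0, ns ! 1]\<close>) simp
  show "set [o1 nb G L v i, o2 nb G L v i] = set ns"
    unfolding o1_def o2_def sn assms(3)[symmetric] by (cases "ordok nb G L v i") (simp_all add: insert_commute)
qed

lemma sum_all4:
  assumes "\<And>j. j \<notin> S \<Longrightarrow> x j = 0" "S \<subseteq> {1..4::nat}" "(\<Sum>j\<in>S. x j) = (1::real)"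
  shows "(\<Sum>j\<in>{1..4}. x j) = 1"
proof -
  have "(\<Sum>j\<in>{1..4}. x j) = (\<Sum>j\<in>S. x j)"
    by (rule sum.mono_neutral_right) (use assms in auto)
  then show ?thesis using assms(3) by simp
qed

lemma exact:
  assumes vn: "valid_nb nb" and r: "reachable G L v"
  shows "prob G L v i = Pstep nb prob G L v i"
proof -
  have w: "wfg G L" and vV: "v \<in> fst G" and dv: "deg (snd G) v \<le> 2" and cv: "card (L v) \<ge> deg (snd G) v + 2"
    using r unfolding reachable_alt by auto
  have sg: "simple_graph G" using wfgD(1)[OF w] .
  let ?ns = "nb (snd G) v"
  let ?Gv = "delv G v"
  have ds: "distinct ?ns" and sn: "set ?ns = nbrs (snd G) v" and ln: "length ?ns = deg (snd G) v"
    using nb_props[OF vn sg] by auto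
  have wv: "wfg ?Gv L" using wfg_delv[OF w vV] .
  have Lv4: "L v \<subseteq> {1..4}" using wfgD(2)[OF w vV] .
  have fL: "finite (L v)" using wfg_fin_L[OF w vV] .
  have z: "0 \<notin> L v" using wfg_0_notin[OF w vV] .
  have c4: "card (L v) \<le> 4" using card_mono[OF _ Lv4] by simp
  have PV: "prob G L v i = (if i \<in> L v then tprod prob G L v us i / (\<Sum>j\<in>L v. tprod prob G L v us j) else 0)"
    if "distinct us" "set us = nbrs (snd G) v" for us
    using prob_vertex[OF sg vV that fL z wfg_fin_col[OF w] wfg_fin_col[OF wv] wfg_col_pos[OF wv]] .
  show ?thesis
  proof (cases "i \<in> L v")
    case False
    then show ?thesis using Pstep_notin[of i L v nb prob G] prob_notin[of v G i L, OF vV False] by simp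
  next
    case iL: True
    consider "deg (snd G) v = 0" | "deg (snd G) v = 1" | "deg (snd G) v = 2" using dv by linarith
    then show ?thesis
    proof cases
      case 1
      then have "?ns = []" using ln by simp
      then show ?thesis using PV[OF ds sn] iL Pstep_deg0[of i L v G nb prob, OF iL 1] unfolding tprod_def by simp
    next
      case 2
      let ?v1 = "?ns ! 0"
      have nsv: "?ns = [?v1]" using len1 ln 2 by simp
      have v1n: "?v1 \<in> nbrs (snd G) v" using sn nsv by (metis list.set_intros(1))
      have v1V: "?v1 \<in> fst ?Gv" using reach_child[OF w vV ds _ , of 0] sn 2 ln unfolding reachable_alt by auto
      let ?x = "\<lambda>j. prob ?Gv L ?v1 j"
      have tp: "tprod prob G L v ?ns j = 1 - ?x j" for j
        unfolding tprod_def using ln 2 by simp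
      have S1: "(\<Sum>j\<in>{1..4}. ?x j) = 1"
        by (rule sum_all4[of "L ?v1"]) (use prob_notin[of ?v1 ?Gv _ L] v1V wfgD(2)[OF wv v1V]
            sum_prob[OF wfg_fin_col[OF wv] v1V wfg_fin_L[OF wv v1V] wfg_col_pos[OF wv]] in auto)
      have c3: "card (L v) = 3 \<or> card (L v) = 4" using cv c4 2 by linarith
      then show ?thesis
      proof
        assume c: "card (L v) = 4"
        then have "L v = {1..4}" using card_subset_eq[OF _ Lv4] by simp
        then have "(\<Sum>j\<in>L v. tprod prob G L v ?ns j) = 3"
          unfolding tp using S1 by (simp add: sum_subtractf)
        then show ?thesis using PV[OF ds sn] iL Pstep_deg1_4[of i L v G nb prob, OF iL 2 c] tp by simp
      next
        assume c: "card (L v) = 3"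
        let ?m = "the_elem ({1..4} - L v)"
        have "card ({1..4::nat} - L v) = 1" using card_Diff_subset[OF fL Lv4] c by simp
        then obtain m where m: "{1..4::nat} - L v = {m}" using card_1_singletonE by blast
        then have mm: "?m = m" by simp
        have Lvm: "L v = {1..4} - {m}" using m Lv4 by blast
        have mi: "m \<in> {1..4}" using m by blast
        have "(\<Sum>j\<in>L v. ?x j) = 1 - ?x m"
          unfolding Lvm using S1 sum_diff1[of "{1..4::nat}" ?x m] mi by simp
        then have "(\<Sum>j\<in>L v. tprod prob G L v ?ns j) = 2 + ?x m"
          unfolding tp using c by (simp add: sum_subtractf)
        then show ?thesis using PV[OF ds sn] iL Pstep_deg1_3[of i L v G nb prob, OF iL 2 c] tp mm by simp
      qed
    next
      case 3
      let ?v1 = "o1 nb G L v i" and ?v2 = "o2 nb G L v i"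
      have ne: "?v1 \<noteq> ?v2" and s12: "set [?v1, ?v2] = set ?ns" and d12: "distinct [?v1, ?v2]"
        using o12[of ?ns nb G v L i, OF ds _ refl] ln 3 by auto
      have v1n: "?v1 \<in> nbrs (snd G) v" using s12 sn by auto
      have v1V: "?v1 \<in> fst ?Gv" using reach_child[OF w vV d12 _ , of 0] s12 sn unfolding reachable_alt by auto
      have sgv: "simple_graph ?Gv" using wfgD(1)[OF wv] .
      let ?us = "nb (snd ?Gv) ?v1"
      have dus: "distinct ?us" and sus: "set ?us = nbrs (snd ?Gv) ?v1" using nb_props[OF vn sgv] by auto
      have wvv: "wfg (delv ?Gv ?v1) L" using wfg_delv[OF wv v1V] .
      have fx: "prob ?Gv L ?v1 j = fval nb prob G L v ?v1 j" for j
        unfolding fval_def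
        using prob_vertex[OF sgv v1V dus sus wfg_fin_L[OF wv v1V] wfg_0_notin[OF wv v1V] wfg_fin_col[OF wv]
            wfg_fin_col[OF wvv] wfg_col_pos[OF wvv]] by simp
      have tp: "tprod prob G L v [?v1, ?v2] j = (1 - fval nb prob G L v ?v1 j) * (1 - yval prob G L v ?v1 ?v2 j)" for j
        unfolding tprod_def yval_def fx[symmetric] by (simp add: numeral_2_eq_2)
      show ?thesis using PV[OF d12 s12[unfolded sn]] iL Pstep_deg2[of i L v G nb prob, OF iL 3] tp
        unfolding d2val_def by simp
    qed
  qed
qed

definition goodval :: "nat \<Rightarrow> bool \<Rightarrow> real \<Rightarrow> bool" where
 "goodval d inL r \<longleftrightarrow> 0 \<le> r \<and> r \<le> 1/2 \<and> (r = 0 \<longleftrightarrow> \<not> inL) \<and> (r \<noteq> 0 \<longrightarrow> 1/13 \<le> r)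
    \<and> (r \<noteq> 0 \<longrightarrow> d \<le> 1 \<longrightarrow> 1/6 \<le> r) \<and> (r = 1/2 \<or> r \<le> 13/27)"

lemma arith_deg1_4: "0 \<le> x \<Longrightarrow> x \<le> 1/2 \<Longrightarrow> goodval 1 True ((1 - x) / 3)"
  unfolding goodval_def by (auto simp: field_simps)

lemma arith_deg1_3:
  fixes x y :: real
  assumes "0 \<le> x" "x \<le> 1/2" "0 \<le> y" "y \<le> 1/2" "x \<noteq> 0 \<Longrightarrow> 1/13 \<le> x" "y \<noteq> 0 \<Longrightarrow> 1/13 \<le> y"
  shows "goodval 1 True ((1 - x) / (2 + y))" "(1 - x) / (2 + y) = 1/2 \<longleftrightarrow> x = 0 \<and> y = 0"
proof -
  have d: "2 + y > 0" using assms by linarith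
  have lo: "(1 - x) / (2 + y) \<ge> 1/5" using assms d by (simp add: field_simps)
  have hi: "(1 - x) / (2 + y) \<le> 1/2" using assms d by (simp add: field_simps)
  have eq: "(1 - x) / (2 + y) = 1/2 \<longleftrightarrow> x = 0 \<and> y = 0"
    using assms d by (auto simp: field_simps)
  have h2: "(1 - x) / (2 + y) = 1/2 \<or> (1 - x) / (2 + y) \<le> 13/27"
  proof (cases "x = 0 \<and> y = 0")
    case True then show ?thesis by simp
  next
    case False
    then have "27 * x + 13 * y \<ge> 1" using assms by (cases "x = 0") auto
    then show ?thesis using d by (simp add: field_simps)
  qed
  have "(1 - x) / (2 + y) \<noteq> 0" "0 \<le> (1 - x) / (2 + y)" "1/13 \<le> (1 - x) / (2 + y)" "1/6 \<le> (1 - x) / (2 + y)"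
    using lo by linarith+
  then show "goodval 1 True ((1 - x) / (2 + y))" unfolding goodval_def using hi h2 by blast
  show "(1 - x) / (2 + y) = 1/2 \<longleftrightarrow> x = 0 \<and> y = 0" using eq .
qed

lemma arith_deg2:
  fixes a B f y :: real
  assumes f0: "0 \<le> f" and f1: "f \<le> 4/7" and y0: "0 \<le> y" and y1: "y \<le> 1/2"
    and a: "a = (1 - f) * (1 - y)" and B1: "(2 + f) / 2 \<le> B" and B2: "B \<le> 2 + f"
  shows "1/13 \<le> a / (a + B)" "a / (a + B) \<le> 1/2"
    "f \<ge> 1/16 \<Longrightarrow> a / (a + B) \<le> 13/27" "y \<ge> 1/13 \<Longrightarrow> a / (a + B) \<le> 13/27"
proof -
  have "(1 - f) * (1 - y) \<ge> (1 - f) * (1/2)" by (rule mult_left_mono) (use f1 y1 in auto)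
  then have alo: "a \<ge> (1 - f) / 2" using a by simp
  have "(1 - f) * (1 - y) \<le> (1 - f) * 1" by (rule mult_left_mono) (use f1 y0 in auto)
  then have ahi: "a \<le> 1 - f" using a by simp
  have pos: "a + B > 0" using alo B1 f0 f1 by (simp add: field_simps)
  show "1/13 \<le> a / (a + B)" using pos alo B2 f1 by (simp add: field_simps)
  show "a / (a + B) \<le> 1/2" using pos ahi B1 f0 by (simp add: field_simps)
  show "f \<ge> 1/16 \<Longrightarrow> a / (a + B) \<le> 13/27" using pos ahi B1 by (simp add: field_simps)
  show "y \<ge> 1/13 \<Longrightarrow> a / (a + B) \<le> 13/27"
  proof -
    assume yy: "y \<ge> 1/13"
    have "(1 - f) * (1 - y) \<le> 1 * (12/13)" by (rule mult_mono) (use f0 f1 yy y1 in auto)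
    then have "a \<le> 12/13" using a by simp
    then show ?thesis using pos B1 f0 by (simp add: field_simps)
  qed
qed

lemma d2_sums:
  fixes f y :: "nat \<Rightarrow> real"
  assumes i: "i \<in> {1..4::nat}" and f: "\<And>j. j \<in> {1..4} \<Longrightarrow> 0 \<le> f j \<and> f j \<le> 4/7"
    and sf: "(\<Sum>j\<in>{1..4}. f j) = 1" and y: "\<And>j. j \<in> {1..4} \<Longrightarrow> 0 \<le> y j \<and> y j \<le> 1/2"
  shows "(\<Sum>j\<in>{1..4}. (1 - f j) * (1 - y j)) = (1 - f i) * (1 - y i) + (\<Sum>j\<in>{1..4} - {i}. (1 - f j) * (1 - y j))"
    "(\<Sum>j\<in>{1..4} - {i}. (1 - f j) * (1 - y j)) = (2 + f i) / 2 + (\<Sum>j\<in>{1..4} - {i}. (1 - f j) * (1/2 - y j))"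
    "(\<Sum>j\<in>{1..4} - {i}. (1 - f j) * (1/2 - y j)) \<ge> 0"
    "(\<Sum>j\<in>{1..4} - {i}. (1 - f j) * (1 - y j)) \<le> 2 + f i"
    "(\<Sum>j\<in>{1..4} - {i}. (1 - f j) * (1/2 - y j)) = 0 \<longleftrightarrow> (\<forall>j\<in>{1..4} - {i}. y j = 1/2)"
    "(\<Sum>j\<in>{1..4} - {i}. (1 - f j)) = 2 + f i"
proof -
  let ?C = "{1..4::nat}"
  show "(\<Sum>j\<in>?C. (1 - f j) * (1 - y j)) = (1 - f i) * (1 - y i) + (\<Sum>j\<in>?C - {i}. (1 - f j) * (1 - y j))"
    using sum.remove[of ?C i] i by simp
  have c3: "card (?C - {i}) = 3" using i by simp
  have sf': "(\<Sum>j\<in>?C - {i}. f j) = 1 - f i" using sum.remove[of ?C i f] i sf by simp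
  show s1: "(\<Sum>j\<in>?C - {i}. (1 - f j)) = 2 + f i" using sf' c3 by (simp add: sum_subtractf)
  have "(\<Sum>j\<in>?C - {i}. (1 - f j) * (1 - y j)) = (\<Sum>j\<in>?C - {i}. (1 - f j) / 2 + (1 - f j) * (1/2 - y j))"
    by (rule sum.cong) (auto simp: algebra_simps)
  also have "\<dots> = (\<Sum>j\<in>?C - {i}. (1 - f j)) / 2 + (\<Sum>j\<in>?C - {i}. (1 - f j) * (1/2 - y j))"
    by (simp add: sum.distrib sum_divide_distrib)
  finally show "(\<Sum>j\<in>?C - {i}. (1 - f j) * (1 - y j)) = (2 + f i) / 2 + (\<Sum>j\<in>?C - {i}. (1 - f j) * (1/2 - y j))"
    using s1 by simp
  have tnn: "\<And>j. j \<in> ?C - {i} \<Longrightarrow> (1 - f j) * (1/2 - y j) \<ge> 0"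
  proof -
    fix j assume j: "j \<in> ?C - {i}"
    then show "(1 - f j) * (1/2 - y j) \<ge> 0" using f[of j] y[of j] by (intro mult_nonneg_nonneg) auto
  qed
  show "(\<Sum>j\<in>?C - {i}. (1 - f j) * (1/2 - y j)) \<ge> 0" using tnn by (intro sum_nonneg) auto
  have "(\<Sum>j\<in>?C - {i}. (1 - f j) * (1 - y j)) \<le> (\<Sum>j\<in>?C - {i}. (1 - f j))"
  proof (rule sum_mono)
    fix j assume j: "j \<in> ?C - {i}"
    have "(1 - f j) * (1 - y j) \<le> (1 - f j) * 1" by (rule mult_left_mono) (use f[of j] y[of j] j in auto)
    then show "(1 - f j) * (1 - y j) \<le> 1 - f j" by simp
  qed
  then show "(\<Sum>j\<in>?C - {i}. (1 - f j) * (1 - y j)) \<le> 2 + f i" using s1 by simp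
  have "(\<Sum>j\<in>?C - {i}. (1 - f j) * (1/2 - y j)) = 0 \<longleftrightarrow> (\<forall>j\<in>?C - {i}. (1 - f j) * (1/2 - y j) = 0)"
    by (rule sum_nonneg_eq_0_iff) (use tnn in auto)
  also have "\<dots> \<longleftrightarrow> (\<forall>j\<in>?C - {i}. y j = 1/2)"
  proof -
    have "\<And>j. j \<in> ?C - {i} \<Longrightarrow> (1 - f j) \<noteq> 0" using f by force
    then show ?thesis by auto
  qed
  finally show "(\<Sum>j\<in>?C - {i}. (1 - f j) * (1/2 - y j)) = 0 \<longleftrightarrow> (\<forall>j\<in>?C - {i}. y j = 1/2)" .
qed

lemma d2_final:
  fixes f y :: "nat \<Rightarrow> real"
  assumes i: "i \<in> {1..4::nat}" and f: "\<And>j. j \<in> {1..4} \<Longrightarrow> 0 \<le> f j \<and> f j \<le> 4/7"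
    and sf: "(\<Sum>j\<in>{1..4}. f j) = 1" and y: "\<And>j. j \<in> {1..4} \<Longrightarrow> 0 \<le> y j \<and> y j \<le> 1/2"
    and fi: "f i \<noteq> 0 \<Longrightarrow> f i \<ge> 1/16" and yi: "y i \<noteq> 0 \<Longrightarrow> y i \<ge> 1/13"
    and Hc: "f i = 0 \<Longrightarrow> y i = 0 \<Longrightarrow> (\<forall>j\<in>{1..4} - {i}. y j = 1/2) \<or>
                 (\<Sum>j\<in>{1..4} - {i}. (1 - f j) * (1/2 - y j)) \<ge> 1/13"
  defines "r \<equiv> (1 - f i) * (1 - y i) / (\<Sum>j\<in>{1..4}. (1 - f j) * (1 - y j))"
  shows "1/13 \<le> r" "r \<le> 1/2" "r = 1/2 \<or> r \<le> 13/27"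
    "r = 1/2 \<longleftrightarrow> f i = 0 \<and> y i = 0 \<and> (\<forall>j\<in>{1..4} - {i}. y j = 1/2)"
proof -
  let ?a = "(1 - f i) * (1 - y i)"
  let ?B = "\<Sum>j\<in>{1..4} - {i}. (1 - f j) * (1 - y j)"
  let ?D = "\<Sum>j\<in>{1..4} - {i}. (1 - f j) * (1/2 - y j)"
  note S = d2_sums[of i f y, OF i f sf y]
  have r: "r = ?a / (?a + ?B)" unfolding r_def using S(1) by simp
  have B1: "(2 + f i) / 2 \<le> ?B" using S(2,3) by linarith
  note A = arith_deg2[OF _ _ _ _ refl B1 S(4)]
  have fi0: "0 \<le> f i" "f i \<le> 4/7" and yi0: "0 \<le> y i" "y i \<le> 1/2" using f[OF i] y[OF i] by auto
  show "1/13 \<le> r" "r \<le> 1/2" unfolding r using A fi0 yi0 by auto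
  have c1: "r \<le> 13/27" if "f i \<noteq> 0 \<or> y i \<noteq> 0"
    using that A(3,4)[OF fi0 yi0] fi yi unfolding r by auto
  have c2: "r = 1 / (2 + ?D)" if "f i = 0" "y i = 0"
    unfolding r using that S(2) by simp
  have Dnn: "?D \<ge> 0" using S(3) .
  show "r = 1/2 \<or> r \<le> 13/27"
  proof (cases "f i = 0 \<and> y i = 0")
    case False then show ?thesis using c1 by blast
  next
    case True
    then have rr: "r = 1 / (2 + ?D)" using c2 by blast
    have "(\<forall>j\<in>{1..4} - {i}. y j = 1/2) \<or> ?D \<ge> 1/13" using Hc True by blast
    then show ?thesis
    proof
      assume "\<forall>j\<in>{1..4} - {i}. y j = 1/2"
      then have "?D = 0" using S(5) by blast
      then show ?thesis using rr by simp
    next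
      assume dd: "?D \<ge> 1/13"
      have gen: "\<And>D::real. D \<ge> 1/13 \<Longrightarrow> 1/(2+D) \<le> 13/27" by (simp add: field_simps)
      show ?thesis using gen[OF dd] rr by simp
    qed
  qed
  show "r = 1/2 \<longleftrightarrow> f i = 0 \<and> y i = 0 \<and> (\<forall>j\<in>{1..4} - {i}. y j = 1/2)"
  proof
    assume h: "r = 1/2"
    then have fy: "f i = 0 \<and> y i = 0" using c1 by force
    then have "1 / (2 + ?D) = 1/2" using c2 h by simp
    then have "?D = 0" using Dnn by (simp add: field_simps)
    then show "f i = 0 \<and> y i = 0 \<and> (\<forall>j\<in>{1..4} - {i}. y j = 1/2)" using S(5) fy by blast
  next
    assume h: "f i = 0 \<and> y i = 0 \<and> (\<forall>j\<in>{1..4} - {i}. y j = 1/2)"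
    then have "?D = 0" using S(5) by blast
    then show "r = 1/2" using c2 h by simp
  qed
qed

definition InvB :: "nat \<Rightarrow> ('a graph \<Rightarrow> 'a lists \<Rightarrow> 'a \<Rightarrow> nat \<Rightarrow> real) \<Rightarrow> bool" where
 "InvB n R \<longleftrightarrow> (\<forall>G L v i. reachable G L v \<longrightarrow> card (fst G) < n \<longrightarrow> goodval (deg (snd G) v) (i \<in> L v) (R G L v i))"

definition base :: "'a graph \<Rightarrow> 'a lists \<Rightarrow> 'a \<Rightarrow> nat \<Rightarrow> real" where
 "base G L v i = (if i \<notin> L v then 0 else 1 / real (card (L v)))"

definition GoodB :: "'a nbord \<Rightarrow> nat \<Rightarrow> ('a graph \<Rightarrow> 'a lists \<Rightarrow> 'a \<Rightarrow> nat \<Rightarrow> real) \<Rightarrow> bool" where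
 "GoodB nb n R \<longleftrightarrow> InvB n R \<and>
   ((\<forall>G L v i. reachable G L v \<longrightarrow> card (fst G) < n \<longrightarrow> R G L v i = base G L v i) \<or>
    (\<exists>R'. InvB n R' \<and> (\<forall>G L v i. reachable G L v \<longrightarrow> card (fst G) < n \<longrightarrow> R G L v i = Pstep nb R' G L v i)))"

lemma InvB_D: "InvB n R \<Longrightarrow> reachable G L v \<Longrightarrow> card (fst G) < n \<Longrightarrow> goodval (deg (snd G) v) (i \<in> L v) (R G L v i)"
  unfolding InvB_def by blast

lemma goodvalD: assumes "goodval d b r"
  shows "0 \<le> r" "r \<le> 1/2" "\<not> b \<Longrightarrow> r = 0" "b \<Longrightarrow> r \<noteq> 0" "b \<Longrightarrow> 1/13 \<le> r" "b \<Longrightarrow> d \<le> 1 \<Longrightarrow> 1/6 \<le> r"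
    "r = 1/2 \<or> r \<le> 13/27"
  using assms unfolding goodval_def by auto

lemma prod_half:
  fixes g :: "nat \<Rightarrow> real"
  assumes "\<And>k. k < n \<Longrightarrow> 1/2 \<le> g k \<and> g k \<le> 1"
  shows "(1/2)^n \<le> (\<Prod>k<n. g k) \<and> (\<Prod>k<n. g k) \<le> 1"
  using assms
proof (induction n)
  case 0 then show ?case by simp
next
  case (Suc n)
  have ih: "(1/2)^n \<le> (\<Prod>k<n. g k) \<and> (\<Prod>k<n. g k) \<le> 1" using Suc by auto
  have gn: "1/2 \<le> g n" "g n \<le> 1" using Suc.prems[of n] by auto
  have "0 \<le> (1/2::real)^n" by simp
  then have p0: "0 \<le> (\<Prod>k<n. g k)" using ih by linarith
  have "(1/2)^n * (1/2) \<le> (\<Prod>k<n. g k) * g n"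
    by (rule mult_mono) (use ih gn p0 in auto)
  moreover have "(\<Prod>k<n. g k) * g n \<le> 1 * 1"
    by (rule mult_mono) (use ih gn in auto)
  ultimately show ?case by (simp add: mult.commute)
qed

lemma frac_bounds:
  fixes p :: "nat \<Rightarrow> real"
  assumes fin: "finite S" and j: "j \<in> S" and pb: "\<And>w. w \<in> S \<Longrightarrow> c \<le> p w \<and> p w \<le> 1"
    and c: "c > 0" and cs: "(real (card S) - 1) * c \<ge> 3/4"
  shows "p j / (\<Sum>w\<in>S. p w) \<le> 4/7" "p j / (\<Sum>w\<in>S. p w) \<ge> c / real (card S)"
    "(\<Sum>w\<in>S. p w) > 0"
proof -
  let ?R = "\<Sum>w\<in>S - {j}. p w"
  have sp: "(\<Sum>w\<in>S. p w) = p j + ?R" using sum.remove[OF fin j] .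
  have "?R \<ge> (\<Sum>w\<in>S - {j}. c)" by (rule sum_mono) (use pb in auto)
  moreover have "card S > 0" by (rule card_gt_0_iff[THEN iffD2]) (use fin j in blast)
  ultimately have R1: "?R \<ge> (real (card S) - 1) * c" using fin j by (simp add: card_Diff_singleton of_nat_diff)
  have pj: "c \<le> p j" "p j \<le> 1" using pb[OF j] by auto
  show pos: "(\<Sum>w\<in>S. p w) > 0" using sp R1 pj c cs by linarith
  have "p j / (p j + ?R) \<le> 4/7" using R1 cs pj c by (simp add: field_simps)
  then show "p j / (\<Sum>w\<in>S. p w) \<le> 4/7" using sp by simp
  have "(\<Sum>w\<in>S. p w) \<le> (\<Sum>w\<in>S. 1)" by (rule sum_mono) (use pb in auto)
  then have "(\<Sum>w\<in>S. p w) \<le> real (card S)" by simp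
  then show "p j / (\<Sum>w\<in>S. p w) \<ge> c / real (card S)"
    using pos pj c by (intro frac_le) auto
qed

lemma D_two:
  fixes f y :: "nat \<Rightarrow> real"
  assumes i: "i \<in> {1..4::nat}" and f: "\<And>j. j \<in> {1..4} \<Longrightarrow> 0 \<le> f j \<and> f j \<le> 4/7"
    and sf: "(\<Sum>j\<in>{1..4}. f j) = 1" and y: "\<And>j. j \<in> {1..4} \<Longrightarrow> 0 \<le> y j \<and> y j \<le> 1/2"
    and j12: "j1 \<in> {1..4} - {i}" "j2 \<in> {1..4} - {i}" "j1 \<noteq> j2" and yj: "y j1 \<le> 5/12" "y j2 \<le> 5/12"
  shows "(\<Sum>j\<in>{1..4} - {i}. (1 - f j) * (1/2 - y j)) \<ge> 1/13"
proof -
  let ?t = "\<lambda>j. (1 - f j) * (1/2 - y j)"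
  have tnn: "\<And>j. j \<in> {1..4} - {i} \<Longrightarrow> ?t j \<ge> 0"
    using f y by (intro mult_nonneg_nonneg) force+
  have "(\<Sum>j\<in>{j1, j2}. ?t j) \<le> (\<Sum>j\<in>{1..4} - {i}. ?t j)"
    by (rule sum_mono2) (use j12 tnn in auto)
  moreover have "(\<Sum>j\<in>{j1, j2}. ?t j) = ?t j1 + ?t j2" using j12 by simp
  moreover have "?t j1 \<ge> (1 - f j1) * (1/12)" by (rule mult_left_mono) (use yj f[of j1] j12 in auto)
  then have "?t j1 \<ge> (1 - f j1) / 12" by simp
  moreover have "?t j2 \<ge> (1 - f j2) * (1/12)" by (rule mult_left_mono) (use yj f[of j2] j12 in auto)
  then have "?t j2 \<ge> (1 - f j2) / 12" by simp
  moreover have "f j1 + f j2 \<le> 1"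
  proof -
    have "(\<Sum>j\<in>{j1, j2}. f j) \<le> (\<Sum>j\<in>{1..4}. f j)"
      by (rule sum_mono2) (use j12 f in auto)
    then show ?thesis using j12 sf by simp
  qed
  moreover have "\<And>T s t1 t2 a b::real. T \<ge> s \<Longrightarrow> s = t1 + t2 \<Longrightarrow> t1 \<ge> (1-a)/12 \<Longrightarrow> t2 \<ge> (1-b)/12 \<Longrightarrow> a+b \<le> 1 \<Longrightarrow> T \<ge> 1/13"
    by (simp add: field_simps)
  ultimately show ?thesis by blast
qed

lemma D_all:
  fixes f y :: "nat \<Rightarrow> real"
  assumes i: "i \<in> {1..4::nat}" and f: "\<And>j. j \<in> {1..4} \<Longrightarrow> 0 \<le> f j \<and> f j \<le> 4/7"
    and sf: "(\<Sum>j\<in>{1..4}. f j) = 1" and y: "\<And>j. j \<in> {1..4} - {i} \<Longrightarrow> y j \<le> 6/13"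
  shows "(\<Sum>j\<in>{1..4} - {i}. (1 - f j) * (1/2 - y j)) \<ge> 1/13"
proof -
  have "(\<Sum>j\<in>{1..4} - {i}. (1 - f j) * (1/26)) \<le> (\<Sum>j\<in>{1..4} - {i}. (1 - f j) * (1/2 - y j))"
  proof (rule sum_mono)
    fix j assume j: "j \<in> {1..4} - {i}"
    show "(1 - f j) * (1/26) \<le> (1 - f j) * (1/2 - y j)" by (rule mult_left_mono) (use y[OF j] f[of j] j in auto)
  qed
  moreover have "(\<Sum>j\<in>{1..4} - {i}. (1 - f j) * (1/26)) = (\<Sum>j\<in>{1..4} - {i}. (1 - f j)) / 26"
    by (simp add: sum_divide_distrib)
  moreover have "(\<Sum>j\<in>{1..4} - {i}. (1 - f j)) = 2 + f i"
  proof -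
    have "(\<And>j. j \<in> {1..4} \<Longrightarrow> 0 \<le> (0::real) \<and> (0::real) \<le> 1/2)" by simp
    then show ?thesis using d2_sums(6)[of i f "\<lambda>_. 0", OF i f sf] by simp
  qed
  moreover have "f i \<ge> 0" using f i by blast
  ultimately show ?thesis by linarith
qed

lemma D_one:
  fixes f y :: "nat \<Rightarrow> real"
  assumes f: "\<And>j. j \<in> {1..4} \<Longrightarrow> 0 \<le> f j \<and> f j \<le> 4/7"
    and y: "\<And>j. j \<in> {1..4} - {i} \<Longrightarrow> 0 \<le> y j \<and> y j \<le> 1/2"
    and j0: "j0 \<in> {1..4::nat} - {i}" and yj: "y j0 = 0"
  shows "(\<Sum>j\<in>{1..4} - {i}. (1 - f j) * (1/2 - y j)) \<ge> 1/13"
proof -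
  let ?t = "\<lambda>j. (1 - f j) * (1/2 - y j)"
  have tnn: "\<And>j. j \<in> {1..4} - {i} \<Longrightarrow> ?t j \<ge> 0"
    using f y by (intro mult_nonneg_nonneg) force+
  have "?t j0 \<le> (\<Sum>j\<in>{1..4} - {i}. ?t j)"
    by (rule member_le_sum) (use j0 tnn in auto)
  moreover have "?t j0 \<ge> 3/14" using f[of j0] j0 yj by auto
  ultimately show ?thesis by linarith
qed

lemma card_le_4: "S \<subseteq> {1..4::nat} \<Longrightarrow> card S \<le> 4"
  using card_mono[of "{1..4::nat}" S] by simp

lemma sub_eq_4: "S \<subseteq> {1..4::nat} \<Longrightarrow> card S \<ge> 4 \<Longrightarrow> S = {1..4}"
  using card_subset_eq[of "{1..4::nat}" S] card_le_4[of S] by simp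

lemma sub_eq_3: "S \<subseteq> {1..4::nat} - {i} \<Longrightarrow> i \<in> {1..4} \<Longrightarrow> card S \<ge> 3 \<Longrightarrow> S = {1..4} - {i}"
proof -
  assume a: "S \<subseteq> {1..4::nat} - {i}" "i \<in> {1..4}" "card S \<ge> 3"
  have c: "card ({1..4::nat} - {i}) = 3" using a(2) by simp
  have "card S \<le> 3" using card_mono[OF _ a(1)] c by simp
  then show ?thesis using card_subset_eq[OF _ a(1)] a c by simp
qed

lemma lmod12: "v1 \<noteq> v2 \<Longrightarrow> lmod L [v1, v2] 1 j u = (if u = v1 then L u - {j} else L u)"
  unfolding lmod_def by simp

lemma hc:
  fixes f :: "nat \<Rightarrow> real"
  assumes vn: "valid_nb nb" and w: "wfg G L" and vV: "v \<in> fst G" and d12: "distinct [v1, v2]"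
    and s12: "set [v1, v2] = nbrs (snd G) v" and Gd: "GoodB nb (card (fst G)) R"
    and i: "i \<in> {1..4}" and iv1: "i \<notin> L v1" and iv2: "i \<notin> L v2"
    and f: "\<And>j. j \<in> {1..4} \<Longrightarrow> 0 \<le> f j \<and> f j \<le> 4/7" and sf: "(\<Sum>j\<in>{1..4}. f j) = 1"
    and yv: "\<And>j. j \<in> {1..4} \<Longrightarrow> 0 \<le> yval R G L v v1 v2 j \<and> yval R G L v v1 v2 j \<le> 1/2"
  shows "(\<forall>j\<in>{1..4} - {i}. yval R G L v v1 v2 j = 1/2) \<or>
         (\<Sum>j\<in>{1..4} - {i}. (1 - f j) * (1/2 - yval R G L v v1 v2 j)) \<ge> 1/13"
proof -
  let ?C = "{1..4::nat}"
  let ?y = "yval R G L v v1 v2"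
  let ?D = "\<Sum>j\<in>?C - {i}. (1 - f j) * (1/2 - ?y j)"
  let ?Gv = "delv G v"
  let ?Lj = "\<lambda>j. lmod L [v1, v2] 1 j"
  define n where "n = card (fst G)"
  have sg: "simple_graph G" using wfgD(1)[OF w] .
  have ne: "v1 \<noteq> v2" using d12 by simp
  have sub12: "set [v1, v2] \<subseteq> nbrs (snd G) v" using s12 by simp
  have v2n: "v2 \<in> nbrs (snd G) v" using s12 by auto
  have v2G: "v2 \<in> fst G" using simple_nbrs_sub[OF sg] v2n by blast
  have fin: "finite (fst G)" using sg unfolding simple_graph_def by blast
  have cGv: "card (fst ?Gv) < n" unfolding n_def using card_fst_delv[OF fin vV] .
  have ych: "reachable ?Gv (?Lj j) v2" for j
    using reach_child[of G L v "[v1, v2]" 1 j, OF w vV d12 sub12] by simp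
  have Lj2: "?Lj j v2 = L v2" for j using lmod12[OF ne] ne by simp
  have yeq: "?y j = R ?Gv (?Lj j) v2 j" for j unfolding yval_def ..
  have wvj: "wfg ?Gv (?Lj j)" for j using wfg_lmod_delv[OF w vV sub12] .
  have v2V: "v2 \<in> fst ?Gv" using ych[of 0] unfolding reachable_alt by blast
  have dG2: "deg (snd G) v2 \<ge> 1" using v2n nbrs_sym[of v2 "snd G" v] deg_pos[OF sg] by blast
  have cL2: "card (L v2) \<ge> deg (snd G) v2 + 1" using wfgD(4)[OF w v2G] .
  have L2sub: "L v2 \<subseteq> ?C - {i}" using wfgD(2)[OF w v2G] iv2 by blast
  have cL2le: "card (L v2) \<le> 3"
    using card_mono[OF _ L2sub] i by simp
  have dGv2: "deg (snd ?Gv) v2 = deg (snd G) v2 - 1" using deg_delv_adj[OF sg v2n] .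
  have tnnD: "?D \<ge> 0" using d2_sums(3)[of i f ?y, OF i f sf yv] by blast
  have yall13: "?D \<ge> 1/13" if "\<And>j. j \<in> ?C - {i} \<Longrightarrow> ?y j \<le> 6/13"
    using D_all[of i f ?y, OF i f sf that] by blast
  have GdI: "InvB n R" using Gd unfolding GoodB_def n_def by blast
  have disj: "(\<forall>j. ?y j = base ?Gv (?Lj j) v2 j) \<or>
              (\<exists>R'. InvB n R' \<and> (\<forall>j. ?y j = Pstep nb R' ?Gv (?Lj j) v2 j))"
  proof -
    from Gd consider "\<forall>G L v i. reachable G L v \<longrightarrow> card (fst G) < n \<longrightarrow> R G L v i = base G L v i"
      | "\<exists>R'. InvB n R' \<and> (\<forall>G L v i. reachable G L v \<longrightarrow> card (fst G) < n \<longrightarrow> R G L v i = Pstep nb R' G L v i)"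
      unfolding GoodB_def n_def by blast
    then show ?thesis
    proof cases
      case 1
      have "\<forall>j. ?y j = base ?Gv (?Lj j) v2 j"
      proof
        fix j show "?y j = base ?Gv (?Lj j) v2 j" unfolding yeq using 1[rule_format, OF ych[of j] cGv] .
      qed
      then show ?thesis by blast
    next
      case 2 then obtain R' where "InvB n R'"
        "\<forall>G L v i. reachable G L v \<longrightarrow> card (fst G) < n \<longrightarrow> R G L v i = Pstep nb R' G L v i" by blast
      moreover have "\<forall>j. ?y j = Pstep nb R' ?Gv (?Lj j) v2 j"
      proof
        fix j show "?y j = Pstep nb R' ?Gv (?Lj j) v2 j" unfolding yeq
          using calculation(2)[rule_format, OF ych[of j] cGv] .
      qed
      ultimately show ?thesis by blast
    qed
  qed
  consider "deg (snd ?Gv) v2 = 0" | "deg (snd ?Gv) v2 = 1"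
    using dGv2 cL2 cL2le by linarith
  then show ?thesis
  proof cases
    case 1
    have yf: "?y j = (if j \<in> L v2 then 1 / real (card (L v2)) else 0)" for j
    proof -
      from disj show ?thesis
      proof
        assume "\<forall>j. ?y j = base ?Gv (?Lj j) v2 j"
        then show ?thesis unfolding base_def Lj2 by simp
      next
        assume "\<exists>R'. InvB n R' \<and> (\<forall>j. ?y j = Pstep nb R' ?Gv (?Lj j) v2 j)"
        then obtain R' where "\<forall>j. ?y j = Pstep nb R' ?Gv (?Lj j) v2 j" by blast
        then show ?thesis
          using Pstep_deg0[of j "?Lj j" v2 ?Gv nb R'] Pstep_notin[of j "?Lj j" v2 nb R' ?Gv] 1 Lj2
          by (cases "j \<in> L v2") auto
      qed
    qed
    have "card (L v2) = 2 \<or> card (L v2) = 3" using cL2 cL2le dG2 by linarith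
    then show ?thesis
    proof
      assume c3: "card (L v2) = 3"
      have "L v2 = ?C - {i}" using sub_eq_3[OF L2sub i] c3 by simp
      then have "\<And>j. j \<in> ?C - {i} \<Longrightarrow> ?y j \<le> 6/13" using yf c3 by simp
      then show ?thesis using yall13 by blast
    next
      assume c2: "card (L v2) = 2"
      have "\<not> ?C - {i} \<subseteq> L v2"
      proof
        assume "?C - {i} \<subseteq> L v2"
        then have "card (?C - {i}) \<le> card (L v2)" using wfg_fin_L[OF w v2G] by (intro card_mono)
        then show False using c2 i by simp
      qed
      then obtain j0 where j0: "j0 \<in> ?C - {i}" "j0 \<notin> L v2" by blast
      have "?y j0 = 0" using yf j0 by simp
      then show ?thesis using D_one[of f i ?y j0] f yv j0 by auto
    qed
  next
    case 2
    have L2eq: "L v2 = ?C - {i}" using sub_eq_3[OF L2sub i] cL2 dGv2 2 by simp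
    have cLj: "card (?Lj j v2) = 3" for j unfolding Lj2 L2eq using i by simp
    from disj show ?thesis
    proof
      assume "\<forall>j. ?y j = base ?Gv (?Lj j) v2 j"
      then have "\<And>j. j \<in> ?C - {i} \<Longrightarrow> ?y j \<le> 6/13" unfolding base_def Lj2 L2eq using i by simp
      then show ?thesis using yall13 by blast
    next
      assume "\<exists>R'. InvB n R' \<and> (\<forall>j. ?y j = Pstep nb R' ?Gv (?Lj j) v2 j)"
      then obtain R' where R': "InvB n R'" "\<forall>j. ?y j = Pstep nb R' ?Gv (?Lj j) v2 j" by blast
      let ?us2 = "nb (snd ?Gv) v2"
      let ?w = "?us2 ! 0"
      let ?Gvv = "delv ?Gv v2"
      have sgv: "simple_graph ?Gv" using simple_delv[OF sg] .
      have dus2: "distinct ?us2" and sus2: "set ?us2 = nbrs (snd ?Gv) v2" and lus2: "length ?us2 = 1"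
        using nb_props[OF vn sgv, of v2] 2 by auto
      have the_i: "the_elem (?C - ?Lj j v2) = i" for j
      proof -
        have "?C - ?Lj j v2 = {i}" unfolding Lj2 L2eq using i by auto
        then show ?thesis by simp
      qed
      have gch: "reachable ?Gvv (?Lj j) ?w" for j
        using reach_child[of ?Gv "?Lj j" v2 ?us2 0 j, OF wvj v2V dus2 _ ] sus2 lus2 by simp
      have finv: "finite (fst ?Gv)" using sgv unfolding simple_graph_def by blast
      have cGvv: "card (fst ?Gvv) < n" using card_fst_delv[OF finv v2V] cGv by linarith
      let ?x = "\<lambda>j. R' ?Gvv (?Lj j) ?w j"
      let ?z = "\<lambda>j. R' ?Gvv (?Lj j) ?w i"
      have yform: "?y j = (1 - ?x j) / (2 + ?z j)" if j: "j \<in> ?C - {i}" for j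
      proof -
        have "j \<in> ?Lj j v2" unfolding Lj2 L2eq using j .
        then show ?thesis using R'(2) Pstep_deg1_3[of j "?Lj j" v2 ?Gv nb R'] 2 cLj the_i by simp
      qed
      have gx: "goodval (deg (snd ?Gvv) ?w) (j \<in> ?Lj j ?w) (?x j)" for j
        using InvB_D[OF R'(1) gch cGvv] .
      have gz: "goodval (deg (snd ?Gvv) ?w) (i \<in> ?Lj j ?w) (?z j)" for j
        using InvB_D[OF R'(1) gch cGvv] .
      have rw: "reachable ?Gvv (?Lj j) ?w" for j using gch .
      show ?thesis
      proof (cases "?w = v1")
        case True
        have "?y j = 1/2" if j: "j \<in> ?C - {i}" for j
        proof -
          have "j \<notin> ?Lj j ?w" "i \<notin> ?Lj j ?w" using lmod12[OF ne] True iv1 by auto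
          then have "?x j = 0" "?z j = 0" using goodvalD(3)[OF gx[of j]] goodvalD(3)[OF gz[of j]] by auto
          then show ?thesis using yform[OF j] by simp
        qed
        then show ?thesis by blast
      next
        case False
        have Lw: "?Lj j ?w = L ?w" for j using lmod12[OF ne] False by simp
        have wcard: "card (L ?w) \<ge> deg (snd ?Gvv) ?w + 2" and wdeg: "deg (snd ?Gvv) ?w \<le> 2"
          and wsub: "L ?w \<subseteq> ?C"
          using rw[of 0] wfgD(2)[of ?Gvv "?Lj 0" ?w] unfolding reachable_alt Lw by auto
        show ?thesis
        proof (cases "i \<in> L ?w")
          case True
          have "?y j \<le> 6/13" if j: "j \<in> ?C - {i}" for j
          proof -
            have z1: "?z j \<ge> 1/13" using goodvalD(5)[OF gz[of j]] True Lw by simp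
            have z0: "?z j \<le> 1/2" "?x j \<ge> 0" "?x j \<le> 1/2" using goodvalD(1,2)[OF gz[of j]] goodvalD(1,2)[OF gx[of j]] by auto
            have key: "13 * ?x j + 6 * ?z j \<ge> 1"
            proof (cases "deg (snd ?Gvv) ?w \<le> 1")
              case True
              then have "?z j \<ge> 1/6" using goodvalD(6)[OF gz[of j]] \<open>i \<in> L ?w\<close> Lw by simp
              then show ?thesis using z0 by linarith
            next
              case False
              then have "card (L ?w) \<ge> 4" using wcard by linarith
              then have "L ?w = ?C" using sub_eq_4[OF wsub] by simp
              then have "?x j \<ge> 1/13" using goodvalD(5)[OF gx[of j]] Lw j by simp
              then show ?thesis using z1 by linarith
            qed
            have "(1 - ?x j) / (2 + ?z j) \<le> 6/13" using key z0 z1 by (simp add: field_simps)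
            then show ?thesis using yform[OF j] by simp
          qed
          then show ?thesis using yall13 by blast
        next
          case False
          have wsub2: "L ?w \<subseteq> ?C - {i}" using wsub False by blast
          have dw: "deg (snd ?Gvv) ?w \<le> 1" using wcard card_mono[OF _ wsub2] i by simp
          have cw2: "card (L ?w) \<ge> 2" using wcard by linarith
          have y512: "?y j \<le> 5/12" if j: "j \<in> L ?w" for j
          proof -
            have jC: "j \<in> ?C - {i}" using j wsub2 by blast
            have "?z j = 0" using goodvalD(3)[OF gz[of j]] False Lw by simp
            moreover have "?x j \<ge> 1/6" using goodvalD(6)[OF gx[of j]] j Lw dw by simp
            ultimately show ?thesis using yform[OF jC] by simp
          qed
          obtain j1 j2 where jj: "j1 \<in> L ?w" "j2 \<in> L ?w" "j1 \<noteq> j2"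
          proof -
            have "\<not> (\<forall>a\<in>L ?w. \<forall>b\<in>L ?w. a = b)"
            proof
              assume "\<forall>a\<in>L ?w. \<forall>b\<in>L ?w. a = b"
              then have "card (L ?w) \<le> 1" using card_le_Suc0_iff_eq[OF finite_subset[OF wsub]] by simp
              then show False using cw2 by simp
            qed
            then show ?thesis using that by blast
          qed
          have "?D \<ge> 1/13"
            using D_two[of i f ?y j1 j2, OF i f sf yv] jj wsub2 y512 by blast
          then show ?thesis by blast
        qed
      qed
    qed
  qed
qed

lemma cs_bound: "m \<le> (2::nat) \<Longrightarrow> card S \<ge> m + 2 \<Longrightarrow> (real (card S) - 1) * (1/2)^m \<ge> 3/4"
proof -
  assume a: "m \<le> 2" "card S \<ge> m + 2"
  have "real (card S) - 1 \<ge> real m + 1" using a(2) by linarith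
  moreover have "(real m + 1) * (1/2)^m \<ge> 3/4" using a(1)
    by (cases m; cases "m - 1") (auto simp: numeral_2_eq_2)
  ultimately show ?thesis
    by (smt (verit, ccfv_SIG) mult_right_mono zero_le_divide_1_iff zero_le_power)
qed

lemma deg2_main:
  assumes vn: "valid_nb nb" and r: "reachable G L v" and d: "deg (snd G) v = 2" and iL: "i \<in> L v"
    and Gd: "GoodB nb (card (fst G)) R"
  shows "goodval 2 True (Pstep nb R G L v i)"
    "Pstep nb R G L v i = 1/2 \<longleftrightarrow> (i \<notin> L (o1 nb G L v i) \<and> i \<notin> L (o2 nb G L v i) \<and>
        (\<forall>j\<in>{1..4} - {i}. yval R G L v (o1 nb G L v i) (o2 nb G L v i) j = 1/2))"
proof -
  let ?C = "{1..4::nat}"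
  define v1 where "v1 = o1 nb G L v i"
  define v2 where "v2 = o2 nb G L v i"
  define n where "n = card (fst G)"
  have w: "wfg G L" and vV: "v \<in> fst G" and cv: "card (L v) \<ge> deg (snd G) v + 2"
    using r unfolding reachable_alt by auto
  have sg: "simple_graph G" using wfgD(1)[OF w] .
  have fin: "finite (fst G)" using sg unfolding simple_graph_def by blast
  have LvC: "L v = ?C" using sub_eq_4[OF wfgD(2)[OF w vV]] cv d by simp
  have i: "i \<in> ?C" using iL LvC by simp
  let ?ns = "nb (snd G) v"
  have ds: "distinct ?ns" and sn: "set ?ns = nbrs (snd G) v" and ln: "length ?ns = 2"
    using nb_props[OF vn sg, of v] d by auto
  have ne: "v1 \<noteq> v2" and s12: "set [v1, v2] = nbrs (snd G) v" and d12: "distinct [v1, v2]"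
    using o12[of ?ns nb G v L i, OF ds ln refl] sn unfolding v1_def v2_def by auto
  have sub12: "set [v1, v2] \<subseteq> nbrs (snd G) v" using s12 by simp
  let ?Gv = "delv G v"
  have wv: "wfg ?Gv L" using wfg_delv[OF w vV] .
  have sgv: "simple_graph ?Gv" using wfgD(1)[OF wv] .
  have cGv: "card (fst ?Gv) < n" unfolding n_def using card_fst_delv[OF fin vV] .
  have Inv: "InvB n R" using Gd unfolding GoodB_def n_def by blast
  have ych: "reachable ?Gv (lmod L [v1, v2] 1 j) v2" for j
    using reach_child[of G L v "[v1, v2]" 1 j, OF w vV d12 sub12] by simp
  have Lj2: "lmod L [v1, v2] 1 j v2 = L v2" for j using lmod12[OF ne] ne by simp
  let ?y = "yval R G L v v1 v2"
  have gy: "goodval (deg (snd ?Gv) v2) (j \<in> L v2) (?y j)" for j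
    using InvB_D[OF Inv ych[of j] cGv, of j] Lj2 unfolding yval_def by simp
  have v1ch: "reachable ?Gv L v1"
    using reach_child[of G L v "[v1, v2]" 0 0, OF w vV d12 sub12] by simp
  have v1V: "v1 \<in> fst ?Gv" and d1: "deg (snd ?Gv) v1 \<le> 2" and c1: "card (L v1) \<ge> deg (snd ?Gv) v1 + 2"
    using v1ch unfolding reachable_alt by auto
  have L1sub: "L v1 \<subseteq> ?C" using wfgD(2)[OF wv v1V] .
  have finL1: "finite (L v1)" using wfg_fin_L[OF wv v1V] .
  let ?us = "nb (snd ?Gv) v1"
  have dus: "distinct ?us" and sus: "set ?us = nbrs (snd ?Gv) v1" and lus: "length ?us = deg (snd ?Gv) v1"
    using nb_props[OF vn sgv, of v1] by auto
  have finv: "finite (fst ?Gv)" using sgv unfolding simple_graph_def by blast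
  have cGvv: "card (fst (delv ?Gv v1)) < n" using card_fst_delv[OF finv v1V] cGv by linarith
  let ?p = "\<lambda>w. tprod R ?Gv L v1 ?us w"
  let ?c = "(1/2::real) ^ length ?us"
  have pb: "?c \<le> ?p w \<and> ?p w \<le> 1" for w
    unfolding tprod_def
  proof (rule prod_half)
    fix k assume k: "k < length ?us"
    have "reachable (delv ?Gv v1) (lmod L ?us k w) (?us ! k)"
      using reach_child[of ?Gv L v1 ?us k w, OF wv v1V dus _ k] sus by simp
    then have "goodval (deg (snd (delv ?Gv v1)) (?us ! k)) (w \<in> lmod L ?us k w (?us ! k))
        (R (delv ?Gv v1) (lmod L ?us k w) (?us ! k) w)" using InvB_D[OF Inv _ cGvv] by blast
    then show "1/2 \<le> 1 - R (delv ?Gv v1) (lmod L ?us k w) (?us ! k) w \<and>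
        1 - R (delv ?Gv v1) (lmod L ?us k w) (?us ! k) w \<le> 1"
      using goodvalD(1,2) by fastforce
  qed
  have cpos: "?c > 0" by simp
  have c4: "?c \<ge> 1/4"
  proof -
    have "(1/2::real)^2 \<le> (1/2) ^ length ?us" by (rule power_decreasing) (use lus d1 in auto)
    then show ?thesis by (simp add: power2_eq_square)
  qed
  have csb: "(real (card (L v1)) - 1) * ?c \<ge> 3/4" using cs_bound[of "length ?us" "L v1"] lus d1 c1 by simp
  let ?f = "fval nb R G L v v1"
  have fdef: "?f j = (if j \<notin> L v1 then 0 else ?p j / (\<Sum>w\<in>L v1. ?p w))" for j
    unfolding fval_def ..
  note FB = frac_bounds[of "L v1" _ ?c ?p, OF finL1 _ pb cpos csb]
  have Spos: "(\<Sum>w\<in>L v1. ?p w) > 0" if "j \<in> L v1" for j using FB(3)[OF that] .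
  have fb: "0 \<le> ?f j \<and> ?f j \<le> 4/7" for j
  proof (cases "j \<in> L v1")
    case True
    have "?p j \<ge> 0" using pb[of j] cpos by linarith
    then show ?thesis using fdef FB(1)[OF True] Spos[OF True] by simp
  next
    case False then show ?thesis using fdef by simp
  qed
  have fpos: "?f j \<ge> 1/16" if j: "j \<in> L v1" for j
  proof -
    have "real (card (L v1)) \<le> 4" using card_le_4[OF L1sub] by simp
    moreover have "card (L v1) > 0" using j finL1 card_gt_0_iff by blast
    ultimately have "?c / real (card (L v1)) \<ge> (1/4) / 4" using c4
      by (intro frac_le) auto
    then have "(1/4)/4 \<le> ?p j / (\<Sum>w\<in>L v1. ?p w)" using FB(2)[OF j] by linarith
    moreover have "?f j = ?p j / (\<Sum>w\<in>L v1. ?p w)" using fdef j by simp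
    ultimately show ?thesis by simp
  qed
  have f0: "?f j = 0 \<longleftrightarrow> j \<notin> L v1" for j using fpos[of j] fdef[of j] by auto
  have sf: "(\<Sum>j\<in>?C. ?f j) = 1"
  proof -
    obtain j0 where j0: "j0 \<in> L v1" using c1 by fastforce
    have "(\<Sum>j\<in>?C. ?f j) = (\<Sum>j\<in>L v1. ?f j)"
      by (rule sum.mono_neutral_right) (use L1sub fdef in auto)
    also have "\<dots> = (\<Sum>j\<in>L v1. ?p j / (\<Sum>w\<in>L v1. ?p w))" using fdef by simp
    also have "\<dots> = 1" using Spos[OF j0] by (simp flip: sum_divide_distrib)
    finally show ?thesis .
  qed
  have yb: "0 \<le> ?y j \<and> ?y j \<le> 1/2" for j using goodvalD(1,2)[OF gy[of j]] by auto
  have fi: "?f i \<noteq> 0 \<Longrightarrow> ?f i \<ge> 1/16" using fpos f0 by blast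
  have yi: "?y i \<noteq> 0 \<Longrightarrow> ?y i \<ge> 1/13" using goodvalD(3,5)[OF gy[of i]] by blast
  have y0: "?y i = 0 \<longleftrightarrow> i \<notin> L v2" using goodvalD(3,4)[OF gy[of i]] by blast
  have Hc: "?f i = 0 \<Longrightarrow> ?y i = 0 \<Longrightarrow> (\<forall>j\<in>?C - {i}. ?y j = 1/2) \<or>
                 (\<Sum>j\<in>?C - {i}. (1 - ?f j) * (1/2 - ?y j)) \<ge> 1/13"
  proof -
    assume a: "?f i = 0" "?y i = 0"
    then have "i \<notin> L v1" "i \<notin> L v2" using f0 y0 by auto
    then show ?thesis
      by (intro hc[of nb G L v v1 v2 R i ?f, OF vn w vV d12 s12 Gd i _ _ _ sf]) (use fb yb in auto)
  qed
  have fR: "\<And>j. j \<in> ?C \<Longrightarrow> 0 \<le> ?f j \<and> ?f j \<le> 4/7" using fb by blast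
  have yR: "\<And>j. j \<in> ?C \<Longrightarrow> 0 \<le> ?y j \<and> ?y j \<le> 1/2" using yb by blast
  have F: "1/13 \<le> (1 - ?f i) * (1 - ?y i) / (\<Sum>j\<in>?C. (1 - ?f j) * (1 - ?y j))"
    "(1 - ?f i) * (1 - ?y i) / (\<Sum>j\<in>?C. (1 - ?f j) * (1 - ?y j)) \<le> 1/2"
    "(1 - ?f i) * (1 - ?y i) / (\<Sum>j\<in>?C. (1 - ?f j) * (1 - ?y j)) = 1/2 \<or>
     (1 - ?f i) * (1 - ?y i) / (\<Sum>j\<in>?C. (1 - ?f j) * (1 - ?y j)) \<le> 13/27"
    "(1 - ?f i) * (1 - ?y i) / (\<Sum>j\<in>?C. (1 - ?f j) * (1 - ?y j)) = 1/2 \<longleftrightarrow>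
      ?f i = 0 \<and> ?y i = 0 \<and> (\<forall>j\<in>?C - {i}. ?y j = 1/2)"
      apply (rule d2_final(1)[of i ?f ?y]; fact)
     apply (rule d2_final(2)[of i ?f ?y]; fact)
    apply (rule d2_final(3)[of i ?f ?y]; fact)
    apply (rule d2_final(4)[of i ?f ?y]; fact)
    done
  have P: "Pstep nb R G L v i = (1 - ?f i) * (1 - ?y i) / (\<Sum>j\<in>?C. (1 - ?f j) * (1 - ?y j))"
    using Pstep_deg2[of i L v G nb R, OF iL d] unfolding d2val_def v1_def v2_def LvC by simp
  have r1: "1/13 \<le> Pstep nb R G L v i" "Pstep nb R G L v i \<le> 1/2"
    "Pstep nb R G L v i = 1/2 \<or> Pstep nb R G L v i \<le> 13/27"
    "Pstep nb R G L v i = 1/2 \<longleftrightarrow> ?f i = 0 \<and> ?y i = 0 \<and> (\<forall>j\<in>?C - {i}. ?y j = 1/2)"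
    unfolding P
       apply (fact F(1))
      apply (fact F(2))
     apply (fact F(3))
    apply (fact F(4))
    done
  show "goodval 2 True (Pstep nb R G L v i)" unfolding goodval_def using r1(1-3) by auto
  show "Pstep nb R G L v i = 1/2 \<longleftrightarrow> (i \<notin> L (o1 nb G L v i) \<and> i \<notin> L (o2 nb G L v i) \<and>
        (\<forall>j\<in>{1..4} - {i}. yval R G L v (o1 nb G L v i) (o2 nb G L v i) j = 1/2))"
    unfolding r1(4) f0 y0 v1_def[symmetric] v2_def[symmetric] ..
qed

lemma goodval_interval: "goodval d b r \<Longrightarrow> (r \<in> {1/13..13/27} \<longleftrightarrow> r \<noteq> 0 \<and> r \<noteq> 1/2)"
  unfolding goodval_def by auto

lemma InvB_mono: "InvB n R \<Longrightarrow> m \<le> n \<Longrightarrow> InvB m R"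
  unfolding InvB_def by auto

lemma deg1_child:
  assumes vn: "valid_nb nb" and r: "reachable G L v" and d: "deg (snd G) v = 1"
  shows "reachable (delv G v) L (nb (snd G) v ! 0)" "card (fst (delv G v)) < card (fst G)"
proof -
  have w: "wfg G L" and vV: "v \<in> fst G" using r unfolding reachable_alt by auto
  have sg: "simple_graph G" using wfgD(1)[OF w] .
  have ds: "distinct (nb (snd G) v)" and sn: "set (nb (snd G) v) = nbrs (snd G) v"
    and ln: "length (nb (snd G) v) = 1" using nb_props[OF vn sg, of v] d by auto
  show "reachable (delv G v) L (nb (snd G) v ! 0)"
    using reach_child[of G L v "nb (snd G) v" 0 0, OF w vV ds _] sn ln by simp
  have fin: "finite (fst G)" using sg unfolding simple_graph_def by blast
  show "card (fst (delv G v)) < card (fst G)" using card_fst_delv[OF fin vV] .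
qed

lemma Lv_card:
  assumes r: "reachable G L v"
  shows "card (L v) \<ge> deg (snd G) v + 2" "card (L v) \<le> 4" "L v \<subseteq> {1..4}"
  using r wfgD(2)[of G L v] card_le_4[of "L v"] unfolding reachable_alt by auto

lemma step_good:
  assumes vn: "valid_nb nb" and r: "reachable G L v" and Gd: "GoodB nb (card (fst G)) R"
  shows "goodval (deg (snd G) v) (i \<in> L v) (Pstep nb R G L v i)"
proof (cases "i \<in> L v")
  case False
  then show ?thesis using Pstep_notin[of i L v nb R G] unfolding goodval_def by simp
next
  case iL: True
  have Inv: "InvB (card (fst G)) R" using Gd unfolding GoodB_def by blast
  note LC = Lv_card[OF r]
  have dv: "deg (snd G) v \<le> 2" using r unfolding reachable_alt by auto
  consider "deg (snd G) v = 0" | "deg (snd G) v = 1" | "deg (snd G) v = 2" using dv by linarith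
  then show ?thesis
  proof cases
    case 1
    have "card (L v) = 2 \<or> card (L v) = 3 \<or> card (L v) = 4" using LC 1 by linarith
    then show ?thesis using Pstep_deg0[of i L v G nb R, OF iL 1] iL 1 unfolding goodval_def by auto
  next
    case 2
    note ch = deg1_child[OF vn r 2]
    let ?v1 = "nb (snd G) v ! 0"
    have gx: "goodval (deg (snd (delv G v)) ?v1) (j \<in> L ?v1) (R (delv G v) L ?v1 j)" for j
      using InvB_D[OF Inv ch] .
    have "card (L v) = 3 \<or> card (L v) = 4" using LC 2 by linarith
    then show ?thesis
    proof
      assume c: "card (L v) = 4"
      have "goodval 1 True ((1 - R (delv G v) L ?v1 i) / 3)"
        by (rule arith_deg1_4) (use goodvalD(1,2)[OF gx[of i]] in auto)
      then show ?thesis unfolding Pstep_deg1_4[of i L v G nb R, OF iL 2 c] using iL 2 by simp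
    next
      assume c: "card (L v) = 3"
      let ?m = "the_elem ({1..4} - L v)"
      have "goodval 1 True ((1 - R (delv G v) L ?v1 i) / (2 + R (delv G v) L ?v1 ?m))"
        by (rule arith_deg1_3(1)) (use goodvalD(1,2,3,5)[OF gx[of i]] goodvalD(1,2,3,5)[OF gx[of ?m]] in auto)
      then show ?thesis using Pstep_deg1_3[of i L v G nb R, OF iL 2 c] iL 2 by simp
    qed
  next
    case 3
    show ?thesis using deg2_main(1)[OF vn r 3 iL Gd] iL 3 by simp
  qed
qed

definition S1 :: "'a nbord \<Rightarrow> 'a graph \<Rightarrow> 'a lists \<Rightarrow> 'a \<Rightarrow> nat \<Rightarrow> bool" where
  "S1 nb G L v i \<longleftrightarrow> i \<in> L v \<and> (if deg (snd G) v = 0 then card (L v) = 2 else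
     card (L v) = 3 \<and> i \<notin> L (nb (snd G) v ! 0) \<and> the_elem ({1..4} - L v) \<notin> L (nb (snd G) v ! 0))"

lemma half1:
  assumes vn: "valid_nb nb" and r: "reachable G L v" and d: "deg (snd G) v \<le> 1"
    and Inv: "InvB (card (fst G)) R"
  shows "Pstep nb R G L v i = 1/2 \<longleftrightarrow> S1 nb G L v i"
proof (cases "i \<in> L v")
  case False
  then show ?thesis using Pstep_notin[of i L v nb R G] unfolding S1_def by simp
next
  case iL: True
  note LC = Lv_card[OF r]
  consider "deg (snd G) v = 0" | "deg (snd G) v = 1" using d by linarith
  then show ?thesis
  proof cases
    case 1
    have "card (L v) = 2 \<or> card (L v) = 3 \<or> card (L v) = 4" using LC 1 by linarith
    then show ?thesis using Pstep_deg0[of i L v G nb R, OF iL 1] iL 1 unfolding S1_def by auto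
  next
    case 2
    note ch = deg1_child[OF vn r 2]
    let ?v1 = "nb (snd G) v ! 0"
    have gx: "goodval (deg (snd (delv G v)) ?v1) (j \<in> L ?v1) (R (delv G v) L ?v1 j)" for j
      using InvB_D[OF Inv ch] .
    have "card (L v) = 3 \<or> card (L v) = 4" using LC 2 by linarith
    then show ?thesis
    proof
      assume c: "card (L v) = 4"
      have "(1 - R (delv G v) L ?v1 i) / 3 \<noteq> 1/2" using goodvalD(1)[OF gx[of i]] by auto
      then show ?thesis using Pstep_deg1_4[of i L v G nb R, OF iL 2 c] c 2 unfolding S1_def by simp
    next
      assume c: "card (L v) = 3"
      let ?m = "the_elem ({1..4} - L v)"
      have "(1 - R (delv G v) L ?v1 i) / (2 + R (delv G v) L ?v1 ?m) = 1/2 \<longleftrightarrow>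
            R (delv G v) L ?v1 i = 0 \<and> R (delv G v) L ?v1 ?m = 0"
        by (rule arith_deg1_3(2)) (use goodvalD(1,2,3,5)[OF gx[of i]] goodvalD(1,2,3,5)[OF gx[of ?m]] in auto)
      moreover have "R (delv G v) L ?v1 j = 0 \<longleftrightarrow> j \<notin> L ?v1" for j
        using goodvalD(3,4)[OF gx[of j]] by blast
      ultimately show ?thesis using Pstep_deg1_3[of i L v G nb R, OF iL 2 c] iL c 2 unfolding S1_def by simp
    qed
  qed
qed

lemma Pfuel0: "Pfuel nb 0 = base"
  by (intro ext) (simp add: base_def)

lemma Inv_base: "InvB n base"
  unfolding InvB_def
proof (intro allI impI)
  fix G L v i assume r: "reachable G L v"
  note LC = Lv_card[OF r]
  have "card (L v) = 2 \<or> card (L v) = 3 \<or> card (L v) = 4" using LC by linarith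
  then show "goodval (deg (snd G) v) (i \<in> L v) (base G L v i)"
    unfolding goodval_def base_def by auto
qed

lemma Inv_Pfuel: fixes nb :: "'a nbord" shows "valid_nb nb \<Longrightarrow> InvB n (Pfuel nb m)"
proof (induction m arbitrary: n rule: less_induct)
  case (less m)
  show ?case
  proof (cases m)
    case 0 then show ?thesis using Inv_base Pfuel0 by metis
  next
    case (Suc k)
    show ?thesis unfolding InvB_def
    proof (intro allI impI)
      fix G :: "'a graph" and L v i assume r: "reachable G L v" and cn: "card (fst G) < n"
      have Gd: "GoodB nb (card (fst G)) (Pfuel nb k)"
        unfolding GoodB_def
      proof (intro conjI)
        show "InvB (card (fst G)) (Pfuel nb k)" using less Suc by simp
        show "(\<forall>G' L v i. reachable G' L v \<longrightarrow> card (fst G') < card (fst G) \<longrightarrow> Pfuel nb k G' L v i = base G' L v i) \<or>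
          (\<exists>R'. InvB (card (fst G)) R' \<and> (\<forall>G' L v i. reachable G' L v \<longrightarrow> card (fst G') < card (fst G) \<longrightarrow>
               Pfuel nb k G' L v i = Pstep nb R' G' L v i))"
        proof (cases k)
          case 0 then show ?thesis using Pfuel0[of nb] by simp
        next
          case (Suc k')
          have "InvB (card (fst G)) (Pfuel nb k')" using less \<open>m = Suc k\<close> Suc by simp
          then show ?thesis using Suc by auto
        qed
      qed
      show "goodval (deg (snd G) v) (i \<in> L v) (Pfuel nb m G L v i)"
        using step_good[OF less.prems r Gd] Suc by simp
    qed
  qed
qed

lemma Inv_prob: fixes nb :: "'a nbord" shows "valid_nb nb \<Longrightarrow> InvB n (prob :: 'a graph \<Rightarrow> 'a lists \<Rightarrow> 'a \<Rightarrow> nat \<Rightarrow> real)"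
proof (induction n)
  case 0 then show ?case unfolding InvB_def by simp
next
  case (Suc n)
  show ?case unfolding InvB_def
  proof (intro allI impI)
    fix G :: "'a graph" and L v i assume r: "reachable G L v" and cn: "card (fst G) < Suc n"
    have I: "InvB (card (fst G)) (prob :: 'a graph \<Rightarrow> 'a lists \<Rightarrow> 'a \<Rightarrow> nat \<Rightarrow> real)" using InvB_mono[OF Suc.IH[OF Suc.prems], of "card (fst G)"] cn by simp
    have Gd: "GoodB nb (card (fst G)) prob"
      unfolding GoodB_def using I exact[OF Suc.prems] by blast
    show "goodval (deg (snd G) v) (i \<in> L v) (prob G L v i)"
      using step_good[OF Suc.prems r Gd] exact[OF Suc.prems r] by simp
  qed
qed

lemma d2_child:
  assumes vn: "valid_nb nb" and r: "reachable G L v" and d: "deg (snd G) v = 2"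
    and i: "i \<in> {1..4}" and iv2: "i \<notin> L (o2 nb G L v i)"
  shows "reachable (delv G v) (lmod L [o1 nb G L v i, o2 nb G L v i] 1 j) (o2 nb G L v i)"
    "deg (snd (delv G v)) (o2 nb G L v i) \<le> 1"
    "card (fst (delv G v)) < card (fst G)"
proof -
  let ?v1 = "o1 nb G L v i" and ?v2 = "o2 nb G L v i"
  have w: "wfg G L" and vV: "v \<in> fst G" using r unfolding reachable_alt by auto
  have sg: "simple_graph G" using wfgD(1)[OF w] .
  let ?ns = "nb (snd G) v"
  have ds: "distinct ?ns" and sn: "set ?ns = nbrs (snd G) v" and ln: "length ?ns = 2"
    using nb_props[OF vn sg, of v] d by auto
  have s12: "set [?v1, ?v2] = nbrs (snd G) v" and d12: "distinct [?v1, ?v2]"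
    using o12[of ?ns nb G v L i, OF ds ln refl] sn by auto
  have sub12: "set [?v1, ?v2] \<subseteq> nbrs (snd G) v" using s12 by simp
  show "reachable (delv G v) (lmod L [?v1, ?v2] 1 j) ?v2"
    using reach_child[of G L v "[?v1, ?v2]" 1 j, OF w vV d12 sub12] by simp
  have v2n: "?v2 \<in> nbrs (snd G) v" using s12 by auto
  have v2G: "?v2 \<in> fst G" using simple_nbrs_sub[OF sg] v2n by blast
  have cL2: "card (L ?v2) \<ge> deg (snd G) ?v2 + 1" using wfgD(4)[OF w v2G] .
  have L2sub: "L ?v2 \<subseteq> {1..4} - {i}" using wfgD(2)[OF w v2G] iv2 by blast
  have "card (L ?v2) \<le> 3" using card_mono[OF _ L2sub] i by simp
  moreover have "deg (snd (delv G v)) ?v2 = deg (snd G) ?v2 - 1" using deg_delv_adj[OF sg v2n] .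
  ultimately show "deg (snd (delv G v)) ?v2 \<le> 1" using cL2 by linarith
  have fin: "finite (fst G)" using sg unfolding simple_graph_def by blast
  show "card (fst (delv G v)) < card (fst G)" using card_fst_delv[OF fin vV] .
qed

lemma Good_Pfuel: fixes nb :: "'a nbord"
  assumes vn: "valid_nb nb" shows "GoodB nb n (Pfuel nb (Suc k))"
  unfolding GoodB_def using Inv_Pfuel[OF vn] by auto

lemma Good_prob: fixes nb :: "'a nbord"
  assumes vn: "valid_nb nb" shows "GoodB nb n (prob :: 'a graph \<Rightarrow> 'a lists \<Rightarrow> 'a \<Rightarrow> nat \<Rightarrow> real)"
  unfolding GoodB_def using Inv_prob[OF vn, of n] exact[OF vn] by blast

theorem main_thm:
  fixes nb :: "'a nbord" and G :: "'a graph" and k :: nat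
  assumes vn: "valid_nb nb" and r: "reachable G L v" and i: "i \<in> {1..4}"
  defines "q \<equiv> Pfuel nb (Suc (Suc k)) G L v i" and "p \<equiv> prob G L v i"
  shows "(q = 0 \<longleftrightarrow> p = 0) \<and> (q = 1/2 \<longleftrightarrow> p = 1/2) \<and> (q \<in> {1/13..13/27} \<longleftrightarrow> p \<in> {1/13..13/27})"
proof -
  let ?R1 = "Pfuel nb (Suc k)"
  have q: "q = Pstep nb ?R1 G L v i" unfolding q_def by simp
  have p: "p = Pstep nb prob G L v i" unfolding p_def using exact[OF vn r] .
  have gq: "goodval (deg (snd G) v) (i \<in> L v) q"
    unfolding q_def using InvB_D[OF Inv_Pfuel[OF vn, of "Suc (card (fst G))" "Suc (Suc k)"] r] by simp
  have gp: "goodval (deg (snd G) v) (i \<in> L v) p"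
    unfolding p_def using InvB_D[OF Inv_prob[OF vn, of "Suc (card (fst G))"] r] by simp
  have z: "q = 0 \<longleftrightarrow> p = 0" using goodvalD(3,4)[OF gq] goodvalD(3,4)[OF gp] by blast
  have IR1: "InvB n ?R1" for n using Inv_Pfuel[OF vn] .
  have IR0: "InvB n (Pfuel nb k)" for n using Inv_Pfuel[OF vn] .
  have IP: "InvB n (prob :: 'a graph \<Rightarrow> 'a lists \<Rightarrow> 'a \<Rightarrow> nat \<Rightarrow> real)" for n using Inv_prob[OF vn] .
  have h: "q = 1/2 \<longleftrightarrow> p = 1/2"
  proof -
    have dv: "deg (snd G) v \<le> 2" using r unfolding reachable_alt by auto
    show ?thesis
    proof (cases "deg (snd G) v \<le> 1")
      case True
      show ?thesis unfolding q p using half1[OF vn r True IR1] half1[OF vn r True IP] by simp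
    next
      case False
      then have d: "deg (snd G) v = 2" using dv by linarith
      show ?thesis
      proof (cases "i \<in> L v")
        case False
        then show ?thesis using z goodvalD(3)[OF gq] by auto
      next
        case iL: True
        let ?v1 = "o1 nb G L v i" and ?v2 = "o2 nb G L v i"
        have eq: "(\<forall>j\<in>{1..4} - {i}. yval ?R1 G L v ?v1 ?v2 j = 1/2) \<longleftrightarrow>
                  (\<forall>j\<in>{1..4} - {i}. yval prob G L v ?v1 ?v2 j = 1/2)" if iv2: "i \<notin> L ?v2"
        proof -
          note C = d2_child[OF vn r d i iv2]
          have "yval ?R1 G L v ?v1 ?v2 j = 1/2 \<longleftrightarrow> yval prob G L v ?v1 ?v2 j = 1/2" for j
          proof -
            let ?Lj = "lmod L [?v1, ?v2] 1 j"
            have a: "yval ?R1 G L v ?v1 ?v2 j = Pstep nb (Pfuel nb k) (delv G v) ?Lj ?v2 j"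
              unfolding yval_def by simp
            have b: "yval prob G L v ?v1 ?v2 j = Pstep nb prob (delv G v) ?Lj ?v2 j"
              unfolding yval_def using exact[OF vn C(1)] .
            show ?thesis unfolding a b using half1[OF vn C(1) C(2) IR0] half1[OF vn C(1) C(2) IP] by simp
          qed
          then show ?thesis by blast
        qed
        show ?thesis unfolding q p
          using deg2_main(2)[OF vn r d iL Good_Pfuel[OF vn]] deg2_main(2)[OF vn r d iL Good_prob[OF vn]] eq
          by blast
      qed
    qed
  qed
  have iv: "q \<in> {1/13..13/27} \<longleftrightarrow> p \<in> {1/13..13/27}"
    using goodval_interval[OF gq] goodval_interval[OF gp] z h by blast
  show ?thesis using z h iv by blast
qed


theorem theorem12:
  fixes nb :: "'a set set \<Rightarrow> 'a \<Rightarrow> 'a list"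
    and V :: "'a set" and E :: "'a set set" and L :: "'a \<Rightarrow> nat set"
    and v :: 'a and i :: nat and D :: int
  assumes "valid_nb nb"
    and "reachable (V, E) L v"
    and "i \<in> {1..4}"
    and "D \<ge> 2"
  shows "(P nb (V, E) L v i D = 0 \<longleftrightarrow> prob (V, E) L v i = 0)
       \<and> (P nb (V, E) L v i D = 1/2 \<longleftrightarrow> prob (V, E) L v i = 1/2)
       \<and> (P nb (V, E) L v i D \<in> {1/13..13/27} \<longleftrightarrow> prob (V, E) L v i \<in> {1/13..13/27})"
proof -
  have nD: "nat D = Suc (Suc (nat D - 2))" using assms(4) by linarith
  have "P nb (V, E) L v i D = Pfuel nb (Suc (Suc (nat D - 2))) (V, E) L v i"
    unfolding P_def using nD by metis
  then show ?thesis using main_thm[of nb "(V, E)" L v i "nat D - 2", OF assms(1,2,3)] by simp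
qed

end
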